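(* Let $1<\alpha<2$, let $\{S_\alpha(t)\}_{t\ge0}$ be an $\alpha$-times resolvent family on a Banach space $X$ with generator $A$, let $r>0$, and suppose $S_\alpha(\cdot)$ is of bounded semivariation on $[0,r]$. If $f\in C([0,r];X)$, then for every $t\in[0,r]$, $(P_\alpha*f)(t)\in D(A)$ and $$A(P_\alpha*f)(t)=-\int_0^t d_s[S_\alpha(t-s)]f(s),$$ where the right-hand side is a Riemann–Stieltjes integral.
   Context: For $\beta>0$ let $g_\beta(t)=\frac{t^{\beta-1}}{\Gamma(\beta)}$ for $t>0$, and $(g_\beta*f)(t)=\int_0^tg_\beta(t-s)f(s)\,ds$. Let $A$ be a closed, densely defined linear operator on $X$. A family $\{S_\alpha(t)\}_{t\ge0}$ of bounded operators is an $\alpha$-times resolvent family generated by $A$ if: (i) it is strongly continuous on $[0,\infty)$ with $S_\alpha(0)=I$; (ii) $S_\alpha(t)D(A)\subset D(A)$ and $AS_\alpha(t)x=S_\alpha(t)Ax$ for $x\in D(A)$; (iii) $S_\alpha(t)x=x+(g_\alpha*S_\alpha)(t)Ax$ for $x\in D(A)$, $t\ge0$. Define $P_\alpha(t)x=\int_0^tg_{\alpha-1}(t-s)S_\alpha(s)x\,ds$ and $(P_\alpha*f)(t)=\int_0^tP_\alpha(t-s)f(s)\,ds$. For $G:[a,b]\to B(X)$ and a subdivision $d: a=d_0<d_1<\dots<d_n=b$, let $SV_d[G]=\sup\{\|\sum_{i=1}^n[G(d_i)-G(d_{i-1})]x_i\|: x_i\in X,\ \|x_i\|\le1\}$ and $SV[G]=\sup_d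 SV_d[G]$ over all subdivisions; $G$ is of bounded semivariation on $[a,b]$ if $SV[G]<\infty$. *)

theory Defs
  imports "HOL-Analysis.Analysis"
begin

definition gkern :: "real \<Rightarrow> real \<Rightarrow> real" where
  "gkern \<beta> t = (if t > 0 then t powr (\<beta> - 1) / Gamma \<beta> else 0)"

definition closed_densely_defined :: "'a::banach set \<Rightarrow> ('a \<Rightarrow> 'a) \<Rightarrow> bool" where
  "closed_densely_defined D A \<longleftrightarrow>
     subspace D \<and>
     (\<forall>x\<in>D. \<forall>y\<in>D. A (x + y) = A x + A y) \<and>
     (\<forall>c. \<forall>x\<in>D. A (c *\<^sub>R x) = c *\<^sub>R A x) \<and>
     closed {(x, A x) | x. x \<in> D} \<and>
     closure D = UNIV"

definition resolvent_family ::
  "real \<Rightarrow> 'a::banach set \<Rightarrow> ('a \<Rightarrow> 'a) \<Rightarrow> (real \<Rightarrow> 'a \<Rightarrow>\<^sub>L 'a) \<Rightarrow> bool" where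
  "resolvent_family \<alpha> D A S \<longleftrightarrow>
     (\<forall>x. continuous_on {0..} (\<lambda>t. blinfun_apply (S t) x)) \<and>
     S 0 = id_blinfun \<and>
     (\<forall>t\<ge>0. \<forall>x\<in>D. S t x \<in> D \<and> A (S t x) = S t (A x)) \<and>
     (\<forall>t\<ge>0. \<forall>x\<in>D. S t x = x + integral {0..t} (\<lambda>s. gkern \<alpha> (t - s) *\<^sub>R S s (A x)))"

definition Pop :: "real \<Rightarrow> (real \<Rightarrow> 'a::banach \<Rightarrow>\<^sub>L 'a) \<Rightarrow> real \<Rightarrow> 'a \<Rightarrow> 'a" where
  "Pop \<alpha> S t x = integral {0..t} (\<lambda>s. gkern (\<alpha> - 1) (t - s) *\<^sub>R S s x)"

definition Pconv :: "real \<Rightarrow> (real \<Rightarrow> 'a::banach \<Rightarrow>\<^sub>L 'a) \<Rightarrow> (real \<Rightarrow> 'a) \<Rightarrow> real \<Rightarrow> 'a" where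
  "Pconv \<alpha> S f t = integral {0..t} (\<lambda>s. Pop \<alpha> S (t - s) (f s))"

definition subdivision :: "real \<Rightarrow> real \<Rightarrow> nat \<Rightarrow> (nat \<Rightarrow> real) \<Rightarrow> bool" where
  "subdivision a b n d \<longleftrightarrow> d 0 = a \<and> d n = b \<and> (\<forall>i<n. d i < d (Suc i))"

definition bounded_semivariation :: "(real \<Rightarrow> 'a::banach \<Rightarrow>\<^sub>L 'a) \<Rightarrow> real \<Rightarrow> real \<Rightarrow> bool" where
  "bounded_semivariation G a b \<longleftrightarrow>
     (\<exists>M. \<forall>n d xs. subdivision a b n d \<and> (\<forall>i<n. norm (xs i) \<le> 1) \<longrightarrow>
        norm (\<Sum>i<n. (G (d (Suc i)) - G (d i)) (xs i)) \<le> M)"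

definition RS_has_integral ::
  "(real \<Rightarrow> 'a::banach \<Rightarrow>\<^sub>L 'a) \<Rightarrow> (real \<Rightarrow> 'a) \<Rightarrow> real \<Rightarrow> real \<Rightarrow> 'a \<Rightarrow> bool" where
  "RS_has_integral G f a b I \<longleftrightarrow>
     (\<forall>\<epsilon>>0. \<exists>\<delta>>0. \<forall>n d \<xi>.
        subdivision a b n d \<and> (\<forall>i<n. d i \<le> \<xi> i \<and> \<xi> i \<le> d (Suc i)) \<and>
        (\<forall>i<n. d (Suc i) - d i < \<delta>) \<longrightarrow>
        norm ((\<Sum>i<n. (G (d (Suc i)) - G (d i)) (f (\<xi> i))) - I) < \<epsilon>)"

end

theory Submission
  imports Defs
begin


lemma gkern_nonneg: "b > 0 \<Longrightarrow> gkern b w \<ge> 0"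
  by (simp add: gkern_def Gamma_real_pos less_imp_le)

lemma gkern_alt: "b > 1 \<Longrightarrow> gkern b w = (max w 0) powr (b - 1) / Gamma b"
  by (auto simp: gkern_def max_def)

lemma continuous_gkern: "b > 1 \<Longrightarrow> continuous_on S (gkern b)"
proof -
  assume b: "b > 1"
  have "continuous_on S (\<lambda>w. (max w 0) powr (b - 1) / Gamma b)"
  proof -
    have gp: "Gamma b \<noteq> 0" using b Gamma_real_pos[of b] by linarith
    show ?thesis
      using b gp by (intro continuous_on_divide continuous_on_powr' continuous_on_const continuous_on_max continuous_on_id) auto
  qed
  then show ?thesis using gkern_alt[OF b] by simp
qed

lemma gkern_mono: "b \<ge> 1 \<Longrightarrow> 0 \<le> x \<Longrightarrow> x \<le> y \<Longrightarrow> gkern b x \<le> gkern b y"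
  unfolding gkern_def
  by (auto intro!: divide_right_mono powr_mono2 simp: Gamma_real_pos less_imp_le)

lemma gkern_integral:
  assumes b: "b > 0" and w: "w \<ge> 0"
  shows "((\<lambda>v. gkern b (w - v)) has_integral gkern (b + 1) w) {0..w}"
proof -
  define F where "F v = - ((w - v) powr b / Gamma (b + 1))" for v
  have G: "Gamma (b + 1) = b * Gamma b"
    using b by (subst Gamma_plus1) (auto simp: nonpos_Ints_def)
  have gp: "Gamma b > 0" using b Gamma_real_pos by auto
  have gp1: "Gamma (b + 1) \<noteq> 0" using b Gamma_real_pos[of "b+1"] by linarith
  have "((\<lambda>v. gkern b (w - v)) has_integral (F w - F 0)) {0..w}"
  proof (rule fundamental_theorem_of_calculus_interior_strong[of "{}"])
    show "continuous_on {0..w} F" unfolding F_def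
      using b gp1
      by (intro continuous_on_minus continuous_on_divide continuous_on_powr' continuous_on_const continuous_on_diff continuous_on_id) auto
    fix v assume v: "v \<in> {0<..<w} - {}"
    have "((\<lambda>v. (w - v) powr b) has_real_derivative (b * (w - v) powr (b - 1) * (0 - 1))) (at v)"
      using v by (intro derivative_eq_intros DERIV_powr) auto
    then have "(F has_real_derivative (- (b * (w - v) powr (b - 1) * (0 - 1)) / Gamma (b + 1))) (at v)"
      unfolding F_def using v gp1 by (intro derivative_eq_intros) auto
    moreover have "- (b * (w - v) powr (b - 1) * (0 - 1)) / Gamma (b + 1) = gkern b (w - v)"
      using v b gp by (simp add: gkern_def G)
    ultimately show "(F has_vector_derivative gkern b (w - v)) (at v)"
      by (simp add: has_real_derivative_iff_has_vector_derivative)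
  qed (use w in auto)
  moreover have "F w - F 0 = gkern (b + 1) w"
    using w b by (auto simp: F_def gkern_def)
  ultimately show ?thesis by simp
qed



lemma sing_integrable:
  fixes h :: "real \<Rightarrow> 'a::banach"
  assumes b: "0 < b" and au: "a \<le> u" and h: "continuous_on {a..u} h"
  shows "(\<lambda>v. gkern b (u - v) *\<^sub>R h v) integrable_on {a..u}"
proof -
  define g where "g = 1 / b"
  have g: "g > 0" using b by (simp add: g_def)
  define c where "c = (u - a) powr b"
  have c: "c \<ge> 0" by (simp add: c_def)
  define hf where "hf z = h (u - z powr g)" for z
  have pg: "(z powr g) \<le> u - a" if "0 \<le> z" "z \<le> c" for z
  proof -
    have "z powr g \<le> c powr g" using that g by (intro powr_mono2) auto
    also have "\<dots> = u - a" using au b by (simp add: c_def powr_powr g_def)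
    finally show ?thesis .
  qed
  have hfc: "continuous_on {0..c} hf"
    unfolding hf_def
  proof (rule continuous_on_compose2[OF h])
    show "continuous_on {0..c} (\<lambda>z. u - z powr g)"
      using g by (intro continuous_on_diff continuous_on_const continuous_on_powr' continuous_on_id) auto
    show "(\<lambda>z. u - z powr g) ` {0..c} \<subseteq> {a..u}"
      using pg by (force simp: algebra_simps)
  qed
  define H where "H y = integral {0..y} hf" for y
  define \<Phi> where "\<Phi> v = H ((u - v) powr b)" for v
  have Hc: "continuous_on {0..c} H"
    unfolding H_def by (intro indefinite_integral_continuous_1 integrable_continuous_real hfc)
  have pb: "(u - v) powr b \<in> {0..c}" if "v \<in> {a..u}" for v
    using that b by (auto simp: c_def intro!: powr_mono2)
  have \<Phi>c: "continuous_on {a..u} \<Phi>"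
    unfolding \<Phi>_def
  proof (rule continuous_on_compose2[OF Hc])
    show "continuous_on {a..u} (\<lambda>v. (u - v) powr b)"
      using b by (intro continuous_on_powr' continuous_on_diff continuous_on_const continuous_on_id) auto
  qed (use pb in auto)
  define f' where "f' v = (- (b * (u - v) powr (b - 1))) *\<^sub>R h v" for v
  have "(f' has_integral (\<Phi> u - \<Phi> a)) {a..u}"
  proof (rule fundamental_theorem_of_calculus_interior_strong[of "{}"])
    fix v assume v: "v \<in> {a<..<u} - {}"
    define y where "y = (u - v) powr b"
    have y: "0 < y" "y < c" using v b by (auto simp: y_def c_def intro!: powr_less_mono2)
    have d1: "((\<lambda>v. (u - v) powr b) has_vector_derivative (- (b * (u - v) powr (b - 1)))) (at v)"
    proof -
      have "((\<lambda>v. (u - v) powr b) has_real_derivative (b * (u - v) powr (b - 1) * (0 - 1))) (at v)"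
        using v by (intro derivative_eq_intros DERIV_powr) auto
      then show ?thesis by (simp add: has_real_derivative_iff_has_vector_derivative)
    qed
    have d2: "(H has_vector_derivative hf y) (at y)"
    proof -
      have "(H has_vector_derivative hf y) (at y within {0..c})"
        unfolding H_def using y by (intro integral_has_vector_derivative hfc) auto
      then show ?thesis using y by (simp add: at_within_Icc_at)
    qed
    have "hf y = h v"
      using v b by (simp add: hf_def y_def powr_powr g_def)
    then show "(\<Phi> has_vector_derivative f' v) (at v)"
      using vector_diff_chain_at[OF d1, of H] d2
      by (simp add: \<Phi>_def[abs_def] f'_def y_def o_def)
  qed (use au \<Phi>c in auto)
  then have "((\<lambda>v. (- 1 / (b * Gamma b)) *\<^sub>R f' v) has_integral (- 1 / (b * Gamma b)) *\<^sub>R (\<Phi> u - \<Phi> a)) {a..u}"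
    by (rule has_integral_cmul)
  moreover have "(- 1 / (b * Gamma b)) *\<^sub>R f' v = gkern b (u - v) *\<^sub>R h v" if "v \<in> {a..u}" for v
    using b Gamma_real_pos[of b] that by (auto simp: f'_def gkern_def)
  ultimately have "((\<lambda>v. gkern b (u - v) *\<^sub>R h v) has_integral (- 1 / (b * Gamma b)) *\<^sub>R (\<Phi> u - \<Phi> a)) {a..u}"
    by (rule_tac has_integral_eq[where f="\<lambda>v. (- 1 / (b * Gamma b)) *\<^sub>R f' v"]) simp_all
  then show ?thesis by (rule has_integral_integrable)
qed



lemma has_integral_shift_real:
  fixes f :: "real \<Rightarrow> 'a::real_normed_vector"
  shows "((\<lambda>x. f (x + c)) has_integral i) {a - c..b - c} \<longleftrightarrow> (f has_integral i) {a..b}"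
  using has_integral_affinity_iff[of 1 f c i a b] by simp

lemma integral_shift_real:
  fixes f :: "real \<Rightarrow> 'a::real_normed_vector"
  shows "integral {a - c..b - c} (\<lambda>x. f (x + c)) = integral {a..b} f"
proof (cases "f integrable_on {a..b}")
  case True
  then show ?thesis
    by (intro integral_unique has_integral_shift_real[THEN iffD2] integrable_integral)
next
  case False
  then have "\<not> (\<lambda>x. f (x + c)) integrable_on {a - c..b - c}"
    using has_integral_shift_real unfolding integrable_on_def by blast
  then show ?thesis using False by (simp add: not_integrable_integral)
qed

lemma has_integral_flip_real:
  fixes f :: "real \<Rightarrow> 'a::real_normed_vector"
  shows "((\<lambda>x. f (a + b - x)) has_integral i) {a..b} \<longleftrightarrow> (f has_integral i) {a..b}"
proof -
  have "((\<lambda>x. f (a + b - x)) has_integral i) {a..b} \<longleftrightarrow>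
        ((\<lambda>x. (\<lambda>y. f (a + b - y)) (- x)) has_integral i) {-b..-a}"
    by (rule has_integral_reflect_real[symmetric])
  also have "\<dots> \<longleftrightarrow> ((\<lambda>x. f (x + (a + b))) has_integral i) {a - (a + b)..b - (a + b)}"
    by (simp add: algebra_simps)
  also have "\<dots> \<longleftrightarrow> (f has_integral i) {a..b}"
    by (rule has_integral_shift_real)
  finally show ?thesis .
qed

lemma integral_flip_real:
  fixes f :: "real \<Rightarrow> 'a::real_normed_vector"
  shows "integral {a..b} (\<lambda>x. f (a + b - x)) = integral {a..b} f"
proof (cases "f integrable_on {a..b}")
  case True
  then show ?thesis
    by (intro integral_unique has_integral_flip_real[THEN iffD2] integrable_integral)
next
  case False
  then have "\<not> (\<lambda>x. f (a + b - x)) integrable_on {a..b}"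
    using has_integral_flip_real unfolding integrable_on_def by blast
  then show ?thesis using False by (simp add: not_integrable_integral)
qed

lemma gkern_integral_gen:
  assumes b: "b > 0" and cw: "c \<le> w"
  shows "((\<lambda>v. gkern b (w - v)) has_integral gkern (b + 1) (w - c)) {c..w}"
proof -
  have "((\<lambda>v. gkern b ((w - c) - v)) has_integral gkern (b + 1) (w - c)) {0..w - c}"
    using gkern_integral[OF b, of "w - c"] cw by simp
  then have "((\<lambda>v. (\<lambda>v. gkern b (w - v)) (v + c)) has_integral gkern (b + 1) (w - c)) {c - c..w - c}"
    by (simp add: algebra_simps)
  then show ?thesis by (rule has_integral_shift_real[THEN iffD1])
qed

definition kn :: "real \<Rightarrow> nat \<Rightarrow> real \<Rightarrow> real" where
  "kn b n w = (max w (1 / real n)) powr (b - 1) / Gamma b * min 1 (max 0 (real n * w))"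

lemma continuous_kn: "n > 0 \<Longrightarrow> b > 0 \<Longrightarrow> continuous_on S (kn b n)"
proof -
  assume n: "n > 0" and b: "b > 0"
  have g: "Gamma b \<noteq> 0" using b Gamma_real_pos[of b] by linarith
  have nz: "\<forall>w\<in>S. max w (1 / real n) \<noteq> 0"
  proof
    fix w have "1 / real n > 0" using n by simp
    then show "max w (1 / real n) \<noteq> 0" by linarith
  qed
  have c1: "continuous_on S (\<lambda>w. max w (1 / real n) powr (b - 1))"
    by (rule continuous_on_powr[OF continuous_on_max[OF continuous_on_id continuous_on_const] continuous_on_const nz])
  have c2: "continuous_on S (\<lambda>w. min 1 (max 0 (real n * w)))"
    by (intro continuous_on_min continuous_on_max continuous_on_const continuous_on_mult continuous_on_id)
  have "continuous_on S (\<lambda>w. max w (1 / real n) powr (b - 1) / Gamma b * min 1 (max 0 (real n * w)))"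
    by (rule continuous_on_mult[OF continuous_on_divide[OF c1 continuous_on_const] c2]) (use g in auto)
  then show ?thesis unfolding kn_def[abs_def] .
qed

lemma kn_nonpos: "w \<le> 0 \<Longrightarrow> kn b n w = 0"
proof -
  assume w: "w \<le> 0"
  have "real n * w \<le> 0" using w by (simp add: mult_nonneg_nonpos)
  then have "min 1 (max 0 (real n * w)) = 0" by simp
  then show ?thesis by (simp add: kn_def)
qed

lemma kn_eq: "n > 0 \<Longrightarrow> w \<ge> 1 / real n \<Longrightarrow> kn b n w = gkern b w"
proof -
  assume n: "n > 0" and w: "w \<ge> 1 / real n"
  have "1 / real n > 0" using n by simp
  then have w0: "w > 0" using w by linarith
  have "real n * w \<ge> 1" using n w by (simp add: field_simps)
  then have m1: "min 1 (max 0 (real n * w)) = 1" by simp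
  have m2: "max w (1 / real n) = w" using w by simp
  show ?thesis using w0 unfolding kn_def m1 m2 by (simp add: gkern_def)
qed

lemma kn_le:
  assumes n: "n > 0" and b: "0 < b" "b < 1"
  shows "0 \<le> kn b n w \<and> kn b n w \<le> gkern b w"
proof (cases "w \<le> 0")
  case True
  then show ?thesis by (simp add: kn_nonpos gkern_def)
next
  case False
  have gp: "Gamma b > 0" using b by (simp add: Gamma_real_pos)
  show ?thesis
  proof (cases "w \<ge> 1 / real n")
    case True
    then show ?thesis using kn_eq[OF n True] False gp by (simp add: gkern_def)
  next
    case False2: False
    have m: "max w (1 / real n) = 1 / real n" using False2 by simp
    have p1: "(1 / real n) powr (b - 1) \<le> w powr (b - 1)"
      using False False2 b by (intro powr_mono2') auto
    have m1: "0 \<le> min 1 (max 0 (real n * w))" "min 1 (max 0 (real n * w)) \<le> 1" by auto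
    have "(1 / real n) powr (b - 1) * min 1 (max 0 (real n * w)) \<le> (1 / real n) powr (b - 1) * 1"
      using m1 by (intro mult_left_mono) auto
    also have "\<dots> \<le> w powr (b - 1)" using p1 by simp
    finally have "(1 / real n) powr (b - 1) * min 1 (max 0 (real n * w)) / Gamma b \<le> w powr (b - 1) / Gamma b"
      using gp by (intro divide_right_mono) auto
    moreover have "0 \<le> (1 / real n) powr (b - 1) * min 1 (max 0 (real n * w)) / Gamma b"
      using m1 gp by simp
    moreover have "kn b n w = (1 / real n) powr (b - 1) * min 1 (max 0 (real n * w)) / Gamma b"
      by (simp add: kn_def m)
    moreover have "gkern b w = w powr (b - 1) / Gamma b" using False by (simp add: gkern_def)
    ultimately show ?thesis by simp
  qed
qed



lemma kn_diff_integral: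
  assumes n: "n > 0" and b: "0 < b" "b < 1" and cw: "c \<le> w"
  shows "(\<lambda>v. gkern b (w - v) - kn b n (w - v)) integrable_on {c..w}"
    and "0 \<le> integral {c..w} (\<lambda>v. gkern b (w - v) - kn b n (w - v))"
    and "integral {c..w} (\<lambda>v. gkern b (w - v) - kn b n (w - v)) \<le> gkern (b + 1) (1 / real n)"
proof -
  let ?f = "\<lambda>v. gkern b (w - v) - kn b n (w - v)"
  have knc: "continuous_on S (\<lambda>v. kn b n (w - v))" for S
    by (rule continuous_on_compose2[OF continuous_kn[OF n b(1)], of _ "\<lambda>v. w - v"])
       (auto intro: continuous_intros)
  have gi: "(\<lambda>v. gkern b (w - v)) integrable_on {x..w}" if "x \<le> w" for x
    using gkern_integral_gen[OF b(1) that] by blast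
  have fi: "?f integrable_on {x..w}" if "x \<le> w" for x
    by (intro integrable_diff gi that integrable_continuous_real knc)
  show "?f integrable_on {c..w}" using fi cw .
  have fnn: "0 \<le> ?f v" for v using kn_le[OF n b, of "w - v"] by simp
  show "0 \<le> integral {c..w} ?f"
    by (intro integral_nonneg fi cw) (use fnn in auto)
  define m where "m = max c (w - 1 / real n)"
  have cm: "c \<le> m" "m \<le> w" using cw n by (auto simp: m_def)
  have z: "integral {c..m} ?f = 0"
  proof (cases "m = c")
    case True then show ?thesis by simp
  next
    case False
    then have mm: "m = w - 1 / real n" by (auto simp: m_def max_def split: if_splits)
    have "?f v = 0" if "v \<in> {c..m}" for v
    proof -
      have "w - v \<ge> 1 / real n" using that mm by auto
      then show ?thesis using kn_eq[OF n] by simp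
    qed
    then have "integral {c..m} ?f = integral {c..m} (\<lambda>v. 0::real)"
      by (intro integral_cong) auto
    then show ?thesis by simp
  qed
  have "integral {c..w} ?f = integral {c..m} ?f + integral {m..w} ?f"
    using Henstock_Kurzweil_Integration.integral_combine[OF cm fi[OF cw]] by simp
  also have "\<dots> = integral {m..w} ?f" using z by simp
  also have "\<dots> \<le> integral {m..w} (\<lambda>v. gkern b (w - v))"
    by (intro integral_le fi gi cm) (use kn_le[OF n b] in auto)
  also have "\<dots> = gkern (b + 1) (w - m)"
    using gkern_integral_gen[OF b(1) cm(2)] by (simp add: integral_unique)
  also have "\<dots> \<le> gkern (b + 1) (1 / real n)"
    using cm b by (intro gkern_mono) (auto simp: m_def)
  finally show "integral {c..w} ?f \<le> gkern (b + 1) (1 / real n)" .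
qed

lemma approx_lemma:
  fixes h :: "real \<Rightarrow> 'a::banach"
  assumes n: "n > 0" and b: "0 < b" "b < 1" and u: "0 \<le> u" "u \<le> T"
    and hc: "continuous_on {0..T} h" and hM: "\<And>v. v \<in> {0..T} \<Longrightarrow> norm (h v) \<le> M"
  shows "(\<lambda>v. gkern b (u - v) *\<^sub>R h v) integrable_on {0..u}"
    and "norm (integral {0..u} (\<lambda>v. gkern b (u - v) *\<^sub>R h v)
               - integral {0..T} (\<lambda>v. kn b n (u - v) *\<^sub>R h v)) \<le> M * gkern (b + 1) (1 / real n)"
proof -
  have hcu: "continuous_on {0..u} h" by (rule continuous_on_subset[OF hc]) (use u in auto)
  show gi: "(\<lambda>v. gkern b (u - v) *\<^sub>R h v) integrable_on {0..u}"
    by (rule sing_integrable[OF b(1) u(1) hcu])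
  have M0: "0 \<le> M" using hM[of 0] u by (smt (verit) atLeastAtMost_iff norm_ge_zero)
  have knc: "continuous_on S (\<lambda>v. kn b n (u - v))" for S
    by (rule continuous_on_compose2[OF continuous_kn[OF n b(1)], of _ "\<lambda>v. u - v"])
       (auto intro: continuous_intros)
  have kc: "continuous_on {0..T} (\<lambda>v. kn b n (u - v) *\<^sub>R h v)"
    by (intro continuous_on_scaleR knc hc)
  have ki: "(\<lambda>v. kn b n (u - v) *\<^sub>R h v) integrable_on {x..y}" if "{x..y} \<subseteq> {0..T}" for x y
    using kc that by (intro integrable_continuous_real) (rule continuous_on_subset)
  have "integral {0..T} (\<lambda>v. kn b n (u - v) *\<^sub>R h v)
        = integral {0..u} (\<lambda>v. kn b n (u - v) *\<^sub>R h v) + integral {u..T} (\<lambda>v. kn b n (u - v) *\<^sub>R h v)"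
    using Henstock_Kurzweil_Integration.integral_combine[OF u ki[of 0 T, OF order_refl]] by simp
  also have "integral {u..T} (\<lambda>v. kn b n (u - v) *\<^sub>R h v) = integral {u..T} (\<lambda>v. 0)"
    by (intro integral_cong) (auto simp: kn_nonpos)
  finally have eq: "integral {0..T} (\<lambda>v. kn b n (u - v) *\<^sub>R h v) = integral {0..u} (\<lambda>v. kn b n (u - v) *\<^sub>R h v)"
    by simp
  have "integral {0..u} (\<lambda>v. gkern b (u - v) *\<^sub>R h v) - integral {0..u} (\<lambda>v. kn b n (u - v) *\<^sub>R h v)
        = integral {0..u} (\<lambda>v. (gkern b (u - v) - kn b n (u - v)) *\<^sub>R h v)"
    using gi ki[of 0 u] u by (subst integral_diff[symmetric]) (auto simp: scaleR_diff_left)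
  also have "norm \<dots> \<le> integral {0..u} (\<lambda>v. (gkern b (u - v) - kn b n (u - v)) * M)"
  proof (rule integral_norm_bound_integral)
    show "(\<lambda>v. (gkern b (u - v) - kn b n (u - v)) *\<^sub>R h v) integrable_on {0..u}"
      using gi ki[of 0 u] u by (simp add: scaleR_diff_left integrable_diff)
    show "(\<lambda>v. (gkern b (u - v) - kn b n (u - v)) * M) integrable_on {0..u}"
      using kn_diff_integral(1)[OF n b u(1)] by (rule integrable_on_mult_left)
    fix v assume v: "v \<in> {0..u}"
    have "0 \<le> gkern b (u - v) - kn b n (u - v)" using kn_le[OF n b, of "u - v"] by simp
    then show "norm ((gkern b (u - v) - kn b n (u - v)) *\<^sub>R h v) \<le> (gkern b (u - v) - kn b n (u - v)) * M"
      using hM[of v] v u by (auto intro: mult_left_mono)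
  qed
  also have "\<dots> = integral {0..u} (\<lambda>v. gkern b (u - v) - kn b n (u - v)) * M"
    by simp
  also have "\<dots> \<le> gkern (b + 1) (1 / real n) * M"
    using kn_diff_integral(3)[OF n b u(1)] M0 by (intro mult_right_mono) auto
  finally show "norm (integral {0..u} (\<lambda>v. gkern b (u - v) *\<^sub>R h v)
               - integral {0..T} (\<lambda>v. kn b n (u - v) *\<^sub>R h v)) \<le> M * gkern (b + 1) (1 / real n)"
    using eq by (simp add: mult.commute)
qed

lemma gkern_small:
  assumes b: "0 < b" and e: "e > 0"
  shows "\<exists>N>0. \<forall>n\<ge>N. gkern (b + 1) (1 / real n) < e"
proof -
  have "((\<lambda>n. real n powr (- b)) \<longlongrightarrow> 0) sequentially"
    using b by (intro tendsto_neg_powr filterlim_real_sequentially) auto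
  then have "((\<lambda>n. real n powr (- b) / Gamma (b + 1)) \<longlongrightarrow> 0) sequentially"
    by (intro tendsto_divide_zero)
  then have "eventually (\<lambda>n. real n powr (- b) / Gamma (b + 1) < e) sequentially"
    using e by (rule order_tendstoD)
  then obtain N where N: "\<And>n. n \<ge> N \<Longrightarrow> real n powr (- b) / Gamma (b + 1) < e"
    by (auto simp: eventually_sequentially)
  show ?thesis
  proof (intro exI conjI allI impI)
    show "Suc N > 0" by simp
    fix n assume "Suc N \<le> n"
    then have n: "n \<ge> N" "n > 0" by auto
    have "gkern (b + 1) (1 / real n) = real n powr (- b) / Gamma (b + 1)"
      using n by (simp add: gkern_def powr_minus_divide powr_divide)
    then show "gkern (b + 1) (1 / real n) < e" using N[OF n(1)] by simp
  qed
qed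



definition conv :: "real \<Rightarrow> (real \<Rightarrow> 'a::real_normed_vector) \<Rightarrow> real \<Rightarrow> 'a" where
  "conv b h u = integral {0..u} (\<lambda>v. gkern b (u - v) *\<^sub>R h v)"

lemma cont_bound:
  fixes h :: "real \<Rightarrow> 'a::real_normed_vector"
  assumes "continuous_on {a..b} h"
  obtains M where "M > 0" "\<And>v. v \<in> {a..b} \<Longrightarrow> norm (h v) \<le> M"
proof -
  have "compact (h ` {a..b})" by (intro compact_continuous_image assms compact_Icc)
  then have "bounded (h ` {a..b})" by (rule compact_imp_bounded)
  then obtain M where "M > 0" "\<And>x. x \<in> h ` {a..b} \<Longrightarrow> norm x \<le> M"
    by (auto simp: bounded_pos)
  then show ?thesis using that by auto
qed

lemma kn_param_cont:
  fixes h :: "real \<Rightarrow> 'a::banach"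
  assumes n: "n > 0" and b: "0 < b" and hc: "continuous_on {0..T} h"
  shows "continuous_on {0..T} (\<lambda>u. integral {0..T} (\<lambda>v. kn b n (u - v) *\<^sub>R h v))"
proof -
  have "continuous_on ({0..T} \<times> cbox 0 T) (\<lambda>(x, t). kn b n (x - t) *\<^sub>R h t)"
  proof -
    have c0: "continuous_on ({0..T} \<times> cbox 0 T) (\<lambda>p::real\<times>real. fst p - snd p)"
      by (intro continuous_intros)
    have c1: "continuous_on ({0..T} \<times> cbox 0 T) (\<lambda>p. kn b n (fst p - snd p))"
      by (rule continuous_on_compose2[OF continuous_kn[OF n b] c0]) auto
    have c2: "continuous_on ({0..T} \<times> cbox 0 T) (\<lambda>p. h (snd p))"
      by (rule continuous_on_compose2[OF hc, of _ snd]) (auto intro: continuous_intros)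
    show ?thesis using continuous_on_scaleR[OF c1 c2] by (simp add: case_prod_beta)
  qed
  from integral_continuous_on_param[OF this] show ?thesis by simp
qed

lemma conv_continuous:
  fixes h :: "real \<Rightarrow> 'a::banach"
  assumes b: "0 < b" "b < 1" and hc: "continuous_on {0..T} h"
  shows "continuous_on {0..T} (conv b h)"
proof -
  obtain M where M: "M > 0" "\<And>v. v \<in> {0..T} \<Longrightarrow> norm (h v) \<le> M"
    using cont_bound[OF hc] by blast
  define F where "F n u = integral {0..T} (\<lambda>v. kn b n (u - v) *\<^sub>R h v)" for n u
  show ?thesis
  proof (rule uniform_limit_theorem[where f = F and F = sequentially])
    show "\<forall>\<^sub>F n in sequentially. continuous_on {0..T} (F n)"
      unfolding F_def eventually_sequentially
      by (intro exI[of _ 1] allI impI kn_param_cont b hc) auto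
    show "uniform_limit {0..T} F (conv b h) sequentially"
      unfolding uniform_limit_iff
    proof (intro allI impI)
      fix e :: real assume e: "e > 0"
      obtain N where N: "N > 0" "\<And>n. n \<ge> N \<Longrightarrow> gkern (b + 1) (1 / real n) < e / M"
        using gkern_small[OF b(1), of "e / M"] e M by auto
      show "\<forall>\<^sub>F n in sequentially. \<forall>u\<in>{0..T}. dist (F n u) (conv b h u) < e"
        unfolding eventually_sequentially
      proof (intro exI[of _ N] allI impI ballI)
        fix n u assume n: "N \<le> n" and u: "u \<in> {0..T}"
        have "dist (F n u) (conv b h u) = norm (conv b h u - F n u)"
          by (simp add: dist_norm norm_minus_commute)
        also have "\<dots> \<le> M * gkern (b + 1) (1 / real n)"
          unfolding conv_def F_def using n N u
          by (intro approx_lemma(2)[OF _ b _ _ hc M(2)]) auto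
        also have "\<dots> < M * (e / M)" using N(2)[OF n] M by (intro mult_strict_left_mono) auto
        also have "\<dots> = e" using M by simp
        finally show "dist (F n u) (conv b h u) < e" .
      qed
    qed
  qed simp
qed

lemma Kn_approx:
  assumes n: "n > 0" and b: "0 < b" "b < 1" and v: "0 \<le> v" "v \<le> \<tau>"
  shows "\<bar>integral {0..\<tau>} (\<lambda>u. kn b n (u - v)) - gkern (b + 1) (\<tau> - v)\<bar> \<le> gkern (b + 1) (1 / real n)"
proof -
  have knc: "continuous_on S (\<lambda>u. kn b n (u - v))" for S
    by (rule continuous_on_compose2[OF continuous_kn[OF n b(1)], of _ "\<lambda>u. u - v"])
       (auto intro: continuous_intros)
  have "integral {0..\<tau>} (\<lambda>u. kn b n (u - v)) = integral {0..v} (\<lambda>u. kn b n (u - v)) + integral {v..\<tau>} (\<lambda>u. kn b n (u - v))"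
    using Henstock_Kurzweil_Integration.integral_combine[OF v integrable_continuous_real[OF knc]] by simp
  also have "integral {0..v} (\<lambda>u. kn b n (u - v)) = integral {0..v} (\<lambda>u. 0::real)"
    by (intro integral_cong) (auto simp: kn_nonpos)
  also have "integral {v..\<tau>} (\<lambda>u. kn b n (u - v)) = integral {v..\<tau>} (\<lambda>u. kn b n (\<tau> - u))"
    using integral_flip_real[of v \<tau> "\<lambda>u. kn b n (\<tau> - u)"] by (simp add: algebra_simps)
  finally have eq: "integral {0..\<tau>} (\<lambda>u. kn b n (u - v)) = integral {v..\<tau>} (\<lambda>u. kn b n (\<tau> - u))"
    by simp
  have gi: "((\<lambda>u. gkern b (\<tau> - u)) has_integral gkern (b + 1) (\<tau> - v)) {v..\<tau>}"
    by (rule gkern_integral_gen[OF b(1) v(2)])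
  have "integral {v..\<tau>} (\<lambda>u. kn b n (\<tau> - u)) = integral {v..\<tau>} (\<lambda>u. gkern b (\<tau> - u)) - integral {v..\<tau>} (\<lambda>u. gkern b (\<tau> - u) - kn b n (\<tau> - u))"
  proof -
    have kc: "continuous_on {v..\<tau>} (\<lambda>u. kn b n (\<tau> - u))"
      by (rule continuous_on_compose2[OF continuous_kn[OF n b(1)], of _ "\<lambda>u. \<tau> - u"])
         (auto intro: continuous_intros)
    show ?thesis
      using gi kn_diff_integral(1)[OF n b v(2)] integrable_continuous_real[OF kc]
      by (subst integral_diff) (auto simp: integrable_on_def)
  qed
  also have "integral {v..\<tau>} (\<lambda>u. gkern b (\<tau> - u)) = gkern (b + 1) (\<tau> - v)"
    using gi by (rule integral_unique)
  finally show ?thesis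
    using eq kn_diff_integral(2,3)[OF n b v(2)] by simp
qed



lemma integral_scaleR_left_HK:
  fixes f :: "'n::euclidean_space \<Rightarrow> real"
  assumes "f integrable_on S"
  shows "integral S (\<lambda>x. f x *\<^sub>R c) = integral S f *\<^sub>R c"
  by (rule integral_unique[OF has_integral_scaleR_left[OF integrable_integral[OF assms]]])

lemma fubini_conv:
  fixes h :: "real \<Rightarrow> 'a::banach"
  assumes b: "0 < b" "b < 1" and \<tau>: "0 \<le> \<tau>" and hc: "continuous_on {0..\<tau>} h"
  shows "integral {0..\<tau>} (conv b h) = integral {0..\<tau>} (\<lambda>v. gkern (b + 1) (\<tau> - v) *\<^sub>R h v)"
proof -
  obtain M where M: "M > 0" "\<And>v. v \<in> {0..\<tau>} \<Longrightarrow> norm (h v) \<le> M"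
    using cont_bound[OF hc] by blast
  define L where "L = integral {0..\<tau>} (conv b h)"
  define R where "R = integral {0..\<tau>} (\<lambda>v. gkern (b + 1) (\<tau> - v) *\<^sub>R h v)"
  have key: "norm (L - R) \<le> 2 * \<tau> * M * gkern (b + 1) (1 / real n)" if n: "n > 0" for n
  proof -
    define F where "F u = integral {0..\<tau>} (\<lambda>v. kn b n (u - v) *\<^sub>R h v)" for u
    define Kn where "Kn v = integral {0..\<tau>} (\<lambda>u. kn b n (u - v))" for v
    define g where "g = gkern (b + 1) (1 / real n)"
    have g0: "g \<ge> 0" unfolding g_def using b by (intro gkern_nonneg) auto
    have Fc: "continuous_on {0..\<tau>} F" unfolding F_def[abs_def] by (rule kn_param_cont[OF n b(1) hc])
    have convc: "continuous_on {0..\<tau>} (conv b h)" by (rule conv_continuous[OF b hc])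
    have c0: "continuous_on ({0..\<tau>} \<times> cbox 0 \<tau>) (\<lambda>p::real\<times>real. snd p - fst p)"
      by (intro continuous_intros)
    have c1: "continuous_on ({0..\<tau>} \<times> cbox 0 \<tau>) (\<lambda>p. kn b n (snd p - fst p))"
      by (rule continuous_on_compose2[OF continuous_kn[OF n b(1)] c0]) auto
    have Knc: "continuous_on {0..\<tau>} Kn"
      unfolding Kn_def[abs_def] using integral_continuous_on_param[of "{0..\<tau>}" 0 \<tau> "\<lambda>v u. kn b n (u - v)"] c1
      by (simp add: case_prod_beta)
    have swap: "integral {0..\<tau>} F = integral {0..\<tau>} (\<lambda>v. Kn v *\<^sub>R h v)"
    proof -
      have c2: "continuous_on (cbox (0, 0) (\<tau>, \<tau>)) (\<lambda>(u, v). kn b n (u - v) *\<^sub>R h v)"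
      proof -
        have e: "cbox (0::real, 0::real) (\<tau>, \<tau>) = {0..\<tau>} \<times> {0..\<tau>}" by (simp add: cbox_Pair_eq)
        have d0: "continuous_on ({0..\<tau>} \<times> {0..\<tau>}) (\<lambda>p::real\<times>real. fst p - snd p)"
          by (intro continuous_intros)
        have d1: "continuous_on ({0..\<tau>} \<times> {0..\<tau>}) (\<lambda>p. kn b n (fst p - snd p))"
          by (rule continuous_on_compose2[OF continuous_kn[OF n b(1)] d0]) auto
        have d2: "continuous_on ({0..\<tau>} \<times> {0..\<tau>}) (\<lambda>p. h (snd p))"
          by (rule continuous_on_compose2[OF hc, of _ snd]) (auto intro: continuous_intros)
        show ?thesis using continuous_on_scaleR[OF d1 d2] e by (simp add: case_prod_beta)
      qed
      have "integral (cbox 0 \<tau>) (\<lambda>u. integral (cbox 0 \<tau>) (\<lambda>v. kn b n (u - v) *\<^sub>R h v))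
          = integral (cbox 0 \<tau>) (\<lambda>v. integral (cbox 0 \<tau>) (\<lambda>u. kn b n (u - v) *\<^sub>R h v))"
        using integral_swap_continuous[of 0 0 \<tau> \<tau> "\<lambda>u v. kn b n (u - v) *\<^sub>R h v"] c2 by simp
      also have "\<dots> = integral {0..\<tau>} (\<lambda>v. Kn v *\<^sub>R h v)"
      proof -
        have "integral {0..\<tau>} (\<lambda>u. kn b n (u - v) *\<^sub>R h v) = Kn v *\<^sub>R h v" for v
        proof -
          have kc: "continuous_on {0..\<tau>} (\<lambda>u. kn b n (u - v))"
            by (rule continuous_on_compose2[OF continuous_kn[OF n b(1)], of _ "\<lambda>u. u - v"])
               (auto intro: continuous_intros)
          show ?thesis unfolding Kn_def
            by (rule integral_scaleR_left_HK[OF integrable_continuous_real[OF kc]])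
        qed
        then show ?thesis by simp
      qed
      finally show ?thesis by (simp add: F_def[abs_def])
    qed
    have n1: "norm (L - integral {0..\<tau>} F) \<le> \<tau> * M * g"
    proof -
      have "L - integral {0..\<tau>} F = integral {0..\<tau>} (\<lambda>u. conv b h u - F u)"
        unfolding L_def using convc Fc
        by (subst integral_diff) (auto intro: integrable_continuous_real)
      also have "norm \<dots> \<le> integral {0..\<tau>} (\<lambda>u. M * g)"
      proof (rule integral_norm_bound_integral)
        show "(\<lambda>u. conv b h u - F u) integrable_on {0..\<tau>}"
          using convc Fc by (intro integrable_diff integrable_continuous_real)
        show "(\<lambda>u. M * g) integrable_on {0..\<tau>}" by (rule Henstock_Kurzweil_Integration.integrable_const_ivl)
        fix u assume u: "u \<in> {0..\<tau>}"
        show "norm (conv b h u - F u) \<le> M * g"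
          unfolding conv_def F_def g_def using u
          by (intro approx_lemma(2)[OF n b _ _ hc M(2)]) auto
      qed
      also have "\<dots> = \<tau> * M * g" using \<tau> by simp
      finally show ?thesis .
    qed
    have n2: "norm (R - integral {0..\<tau>} (\<lambda>v. Kn v *\<^sub>R h v)) \<le> \<tau> * M * g"
    proof -
      have gc: "continuous_on {0..\<tau>} (\<lambda>v. gkern (b + 1) (\<tau> - v) *\<^sub>R h v)"
        by (intro continuous_on_scaleR hc continuous_on_compose2[OF continuous_gkern[of "b+1" UNIV]])
           (use b in \<open>auto intro: continuous_intros\<close>)
      have kc: "continuous_on {0..\<tau>} (\<lambda>v. Kn v *\<^sub>R h v)"
        by (intro continuous_on_scaleR hc Knc)
      have "R - integral {0..\<tau>} (\<lambda>v. Kn v *\<^sub>R h v) = integral {0..\<tau>} (\<lambda>v. (gkern (b + 1) (\<tau> - v) - Kn v) *\<^sub>R h v)"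
        unfolding R_def using gc kc
        by (subst integral_diff[symmetric]) (auto intro: integrable_continuous_real simp: scaleR_diff_left)
      also have "norm \<dots> \<le> integral {0..\<tau>} (\<lambda>u. g * M)"
      proof (rule integral_norm_bound_integral)
        show "(\<lambda>v. (gkern (b + 1) (\<tau> - v) - Kn v) *\<^sub>R h v) integrable_on {0..\<tau>}"
          using gc kc by (simp add: scaleR_diff_left integrable_diff integrable_continuous_real)
        show "(\<lambda>u. g * M) integrable_on {0..\<tau>}" by (rule Henstock_Kurzweil_Integration.integrable_const_ivl)
        fix v assume v: "v \<in> {0..\<tau>}"
        have a: "\<bar>gkern (b + 1) (\<tau> - v) - Kn v\<bar> \<le> g"
          using Kn_approx[OF n b, of v \<tau>] v by (simp add: Kn_def g_def abs_minus_commute)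
        show "norm ((gkern (b + 1) (\<tau> - v) - Kn v) *\<^sub>R h v) \<le> g * M"
          using a M(2)[OF v] by (simp add: mult_mono)
      qed
      also have "\<dots> = \<tau> * M * g" using \<tau> by simp
      finally show ?thesis .
    qed
    have "norm (L - R) \<le> norm (L - integral {0..\<tau>} F) + norm (R - integral {0..\<tau>} (\<lambda>v. Kn v *\<^sub>R h v))"
    proof -
      have "L - R = (L - integral {0..\<tau>} F) - (R - integral {0..\<tau>} (\<lambda>v. Kn v *\<^sub>R h v))"
        using swap by simp
      then show ?thesis by (metis norm_triangle_ineq4)
    qed
    then show ?thesis using n1 n2 by (simp add: g_def)
  qed
  show ?thesis
  proof (rule ccontr)
    assume "\<not> ?thesis"
    then have e: "norm (L - R) > 0" by (simp add: L_def R_def)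
    define e' where "e' = norm (L - R) / (2 * \<tau> * M + 1)"
    have e'0: "e' > 0" using e M \<tau> by (simp add: e'_def add_nonneg_pos)
    obtain N where N: "N > 0" "\<And>n. n \<ge> N \<Longrightarrow> gkern (b + 1) (1 / real n) < e'"
      using gkern_small[OF b(1) e'0] by blast
    have g0: "gkern (b + 1) (1 / real N) \<ge> 0" using b by (intro gkern_nonneg) auto
    have "norm (L - R) \<le> 2 * \<tau> * M * gkern (b + 1) (1 / real N)" using key[OF N(1)] .
    also have "\<dots> \<le> 2 * \<tau> * M * e'" using N(2)[of N] M \<tau> by (intro mult_left_mono) auto
    also have "\<dots> < (2 * \<tau> * M + 1) * e'" using e'0 by (simp add: algebra_simps)
    also have "\<dots> = norm (L - R)"
    proof -
      have "2 * \<tau> * M + 1 > 0" using M \<tau> by (simp add: add_nonneg_pos)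
      then show ?thesis by (simp add: e'_def)
    qed
    finally show False by simp
  qed
qed



lemma integral_in_closed_subspace:
  fixes f :: "'n::euclidean_space \<Rightarrow> 'b::real_normed_vector"
  assumes V: "closed V" "subspace V" and fV: "\<And>x. x \<in> cbox a b \<Longrightarrow> f x \<in> V"
    and I: "(f has_integral y) (cbox a b)"
  shows "y \<in> V"
proof (rule Lim_in_closed_set[OF V(1) _ division_filter_not_empty])
  show "((\<lambda>p. \<Sum>(x,k)\<in>p. Henstock_Kurzweil_Integration.content k *\<^sub>R f x) \<longlongrightarrow> y) (division_filter (cbox a b))"
    using I by (simp add: has_integral_cbox)
  show "\<forall>\<^sub>F p in division_filter (cbox a b). (\<Sum>(x,k)\<in>p. Henstock_Kurzweil_Integration.content k *\<^sub>R f x) \<in> V"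
    using eventually_division_filter_tagged_division[of "cbox a b"]
  proof (rule eventually_mono)
    fix p assume p: "p tagged_division_of cbox a b"
    show "(\<Sum>(x,k)\<in>p. Henstock_Kurzweil_Integration.content k *\<^sub>R f x) \<in> V"
    proof (rule subspace_sum[OF V(2)])
      fix xk assume xk: "xk \<in> p"
      obtain x k where xk': "xk = (x, k)" by fastforce
      have "x \<in> cbox a b" using tagged_division_ofD(2,3)[OF p xk[unfolded xk']] by blast
      then show "(case xk of (x, k) \<Rightarrow> Henstock_Kurzweil_Integration.content k *\<^sub>R f x) \<in> V"
        using xk' fV V(2) by (simp add: subspace_scale)
    qed
  qed
qed

lemma has_integral_Pair_HK:
  fixes f :: "'n::euclidean_space \<Rightarrow> 'a::real_normed_vector" and g :: "'n \<Rightarrow> 'b::real_normed_vector"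
  assumes "(f has_integral I) S" "(g has_integral J) S"
  shows "((\<lambda>x. (f x, g x)) has_integral (I, J)) S"
proof -
  have "((\<lambda>x. (f x, 0)) has_integral (I, 0)) S"
    using has_integral_linear[OF assms(1), of "\<lambda>x. (x, 0)"]
    by (simp add: o_def bounded_linear_Pair bounded_linear_ident bounded_linear_zero)
  moreover have "((\<lambda>x. (0, g x)) has_integral (0, J)) S"
    using has_integral_linear[OF assms(2), of "\<lambda>x. (0, x)"]
    by (simp add: o_def bounded_linear_Pair bounded_linear_ident bounded_linear_zero)
  ultimately have "((\<lambda>x. (f x, 0) + (0, g x)) has_integral (I, 0) + (0, J)) S"
    by (rule has_integral_add)
  then show ?thesis by simp
qed

lemma cdd_subspace: "closed_densely_defined D A \<Longrightarrow> subspace D"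
  by (simp add: closed_densely_defined_def)

lemma cdd_graph_subspace:
  assumes "closed_densely_defined D A"
  shows "subspace {(x, A x) | x. x \<in> D}"
proof -
  have D: "subspace D" and add: "\<And>x y. x \<in> D \<Longrightarrow> y \<in> D \<Longrightarrow> A (x + y) = A x + A y"
    and sc: "\<And>c x. x \<in> D \<Longrightarrow> A (c *\<^sub>R x) = c *\<^sub>R A x"
    using assms by (auto simp: closed_densely_defined_def)
  have z: "A 0 = 0" using sc[of 0 0] subspace_0[OF D] by simp
  show ?thesis unfolding subspace_def
  proof (intro conjI ballI allI)
    show "0 \<in> {(x, A x) | x. x \<in> D}" using z subspace_0[OF D] by (auto simp: zero_prod_def)
    fix p q assume p: "p \<in> {(x, A x) | x. x \<in> D}" and q: "q \<in> {(x, A x) | x. x \<in> D}"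
    then show "p + q \<in> {(x, A x) | x. x \<in> D}"
      using add subspace_add[OF D] by auto
  next
    fix c p assume p: "p \<in> {(x, A x) | x. x \<in> D}"
    then show "c *\<^sub>R p \<in> {(x, A x) | x. x \<in> D}"
      using sc subspace_scale[OF D] by auto
  qed
qed

lemma graph_integral:
  fixes g :: "real \<Rightarrow> 'a::banach"
  assumes cdd: "closed_densely_defined D A" and gD: "\<And>v. v \<in> {a..b} \<Longrightarrow> g v \<in> D"
    and I: "(g has_integral I) {a..b}" and J: "((\<lambda>v. A (g v)) has_integral J) {a..b}"
  shows "I \<in> D \<and> A I = J"
proof -
  have "(I, J) \<in> {(x, A x) | x. x \<in> D}"
  proof (rule integral_in_closed_subspace[where f="\<lambda>v. (g v, A (g v))" and a=a and b=b])
    show "closed {(x, A x) | x. x \<in> D}" using cdd by (simp add: closed_densely_defined_def)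
    show "subspace {(x, A x) | x. x \<in> D}" by (rule cdd_graph_subspace[OF cdd])
    show "\<And>x. x \<in> cbox a b \<Longrightarrow> (g x, A (g x)) \<in> {(x, A x) | x. x \<in> D}" using gD by auto
    show "((\<lambda>v. (g v, A (g v))) has_integral (I, J)) (cbox a b)"
      using has_integral_Pair_HK[OF I J] by simp
  qed
  then show ?thesis by auto
qed

lemma cdd_sum:
  assumes cdd: "closed_densely_defined D A" and fin: "finite K" and xD: "\<And>i. i \<in> K \<Longrightarrow> x i \<in> D"
  shows "(\<Sum>i\<in>K. x i) \<in> D \<and> A (\<Sum>i\<in>K. x i) = (\<Sum>i\<in>K. A (x i))"
  using fin xD
proof (induction K rule: finite_induct)
  case empty
  have D: "subspace D" using cdd by (simp add: closed_densely_defined_def)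
  have sc: "\<And>c x. x \<in> D \<Longrightarrow> A (c *\<^sub>R x) = c *\<^sub>R A x"
    using cdd by (simp add: closed_densely_defined_def)
  have "A 0 = A (0 *\<^sub>R 0)" by simp
  also have "\<dots> = 0" using sc[OF subspace_0[OF D], of 0] by simp
  finally have "A 0 = 0" .
  then show ?case using subspace_0[OF D] by simp
next
  case (insert i K)
  have D: "subspace D" using cdd by (simp add: closed_densely_defined_def)
  have add: "\<And>x y. x \<in> D \<Longrightarrow> y \<in> D \<Longrightarrow> A (x + y) = A x + A y"
    using cdd by (simp add: closed_densely_defined_def)
  from insert show ?case using subspace_add[OF D] add by simp
qed

lemma cdd_diff:
  assumes cdd: "closed_densely_defined D A" and "x \<in> D" "y \<in> D"
  shows "x - y \<in> D \<and> A (x - y) = A x - A y"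
proof -
  have D: "subspace D" and add: "\<And>x y. x \<in> D \<Longrightarrow> y \<in> D \<Longrightarrow> A (x + y) = A x + A y"
    and sc: "\<And>c x. x \<in> D \<Longrightarrow> A (c *\<^sub>R x) = c *\<^sub>R A x"
    using cdd by (auto simp: closed_densely_defined_def)
  have m: "- y \<in> D" using subspace_neg[OF D assms(3)] .
  have Am: "A (- y) = - A y" using sc[OF assms(3), of "-1"] by simp
  have "x - y = x + (- y)" by simp
  then show ?thesis using add[OF assms(2) m] Am subspace_add[OF D assms(2) m]
    by simp
qed

lemma cdd_closed_limit:
  assumes cdd: "closed_densely_defined D A" and xD: "\<And>n. x n \<in> D"
    and lx: "x \<longlonglongrightarrow> l" and ly: "(\<lambda>n. A (x n)) \<longlonglongrightarrow> m"
  shows "l \<in> D \<and> A l = m"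
proof -
  have cl: "closed {(x, A x) | x. x \<in> D}" using cdd by (simp add: closed_densely_defined_def)
  have "(\<lambda>n. (x n, A (x n))) \<longlonglongrightarrow> (l, m)" using lx ly by (rule tendsto_Pair)
  then have "(l, m) \<in> {(x, A x) | x. x \<in> D}"
    using cl xD by (intro Lim_in_closed_set[OF cl]) auto
  then show ?thesis by auto
qed



lemma sv_bound:
  fixes S :: "real \<Rightarrow> 'a::banach \<Rightarrow>\<^sub>L 'a"
  assumes bsv: "bounded_semivariation S 0 r" and r: "r > 0" and S0: "S 0 = id_blinfun"
  shows "\<exists>MS>0. \<forall>u\<in>{0..r}. \<forall>x. norm (S u x) \<le> MS * norm x"
proof -
  obtain M where M: "\<And>n d xs. subdivision 0 r n d \<Longrightarrow> (\<forall>i<n. norm (xs i) \<le> 1) \<Longrightarrow>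
        norm (\<Sum>i<n. (S (d (Suc i)) - S (d i)) (xs i)) \<le> M"
    using bsv unfolding bounded_semivariation_def by blast
  define d1 where "d1 = (\<lambda>i::nat. if i = 0 then 0 else r)"
  have sd1: "subdivision 0 r 1 d1" using r by (simp add: subdivision_def d1_def)
  have M0: "0 \<le> M" using M[OF sd1, of "\<lambda>_. 0"] by simp
  have y1: "norm (S u y) \<le> M + 1" if u: "u \<in> {0..r}" and y: "norm y \<le> 1" for u y
  proof -
    have "norm (S u y - y) \<le> M"
    proof (cases "u = 0")
      case True then show ?thesis using S0 M0 by simp
    next
      case False
      show ?thesis
      proof (cases "u = r")
        case True
        have "norm (\<Sum>i<1. (S (d1 (Suc i)) - S (d1 i)) ((\<lambda>_. y) i)) \<le> M"
          using M[OF sd1, of "\<lambda>_. y"] y by simp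
        then show ?thesis using True S0 by (simp add: d1_def blinfun.diff_left)
      next
        case False2: False
        define d2 where "d2 = (\<lambda>i::nat. if i = 0 then 0 else if i = 1 then u else r)"
        have sd2: "subdivision 0 r 2 d2" using u False False2
          by (auto simp: subdivision_def d2_def less_Suc_eq numeral_2_eq_2)
        define xs where "xs = (\<lambda>i::nat. if i = 0 then y else 0)"
        have "norm (\<Sum>i<2. (S (d2 (Suc i)) - S (d2 i)) (xs i)) \<le> M"
          using M[OF sd2, of xs] y by (simp add: xs_def)
        then show ?thesis using S0 by (simp add: numeral_2_eq_2 d2_def xs_def blinfun.diff_left)
      qed
    qed
    then show ?thesis using y norm_triangle_ineq2[of "S u y" y] by linarith
  qed
  show ?thesis
  proof (intro exI conjI ballI allI)
    show "M + 1 > 0" using M0 by simp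
    fix u x assume u: "u \<in> {0..r}"
    show "norm (S u x) \<le> (M + 1) * norm x"
    proof (cases "x = 0")
      case True then show ?thesis by simp
    next
      case False
      have "S u x = norm x *\<^sub>R S u (x /\<^sub>R norm x)"
        using False by (simp add: blinfun.scaleR_right)
      then have "norm (S u x) = norm x * norm (S u (x /\<^sub>R norm x))" by simp
      also have "\<dots> \<le> norm x * (M + 1)"
        using y1[OF u, of "x /\<^sub>R norm x"] False by (intro mult_left_mono) auto
      finally show ?thesis by (simp add: mult.commute)
    qed
  qed
qed

locale opset =
  fixes \<alpha> r :: real and D :: "'a::banach set" and A :: "'a \<Rightarrow> 'a"
    and S :: "real \<Rightarrow> 'a \<Rightarrow>\<^sub>L 'a" and f :: "real \<Rightarrow> 'a"
  assumes \<alpha>1: "1 < \<alpha>" and \<alpha>2: "\<alpha> < 2"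
    and cdd: "closed_densely_defined D A"
    and rf: "resolvent_family \<alpha> D A S"
    and r: "r > 0"
    and bsv: "bounded_semivariation S 0 r"
    and fc: "continuous_on {0..r} f"
begin

lemma b01: "0 < \<alpha> - 1" "\<alpha> - 1 < 1" using \<alpha>1 \<alpha>2 by auto

lemma S0: "S 0 = id_blinfun" using rf by (simp add: resolvent_family_def)

lemma S_cont: "continuous_on {0..r} (\<lambda>s. S s x)"
  using rf unfolding resolvent_family_def by (meson atLeastAtMost_iff atLeast_iff continuous_on_subset subsetI)

lemma S_cont': "T \<le> r \<Longrightarrow> continuous_on {0..T} (\<lambda>s. S s x)"
  by (rule continuous_on_subset[OF S_cont]) auto

definition MS where "MS = (SOME M. M > 0 \<and> (\<forall>u\<in>{0..r}. \<forall>x. norm (S u x) \<le> M * norm x))"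

lemma MS: "MS > 0" "u \<in> {0..r} \<Longrightarrow> norm (S u x) \<le> MS * norm x"
proof -
  have "\<exists>M. M > 0 \<and> (\<forall>u\<in>{0..r}. \<forall>x. norm (S u x) \<le> M * norm x)"
    using sv_bound[OF bsv r S0] by blast
  then have "MS > 0 \<and> (\<forall>u\<in>{0..r}. \<forall>x. norm (S u x) \<le> MS * norm x)"
    unfolding MS_def by (rule someI_ex)
  then show "MS > 0" "u \<in> {0..r} \<Longrightarrow> norm (S u x) \<le> MS * norm x" by auto
qed

lemma Pop_conv: "Pop \<alpha> S u x = conv (\<alpha> - 1) (\<lambda>s. S s x) u"
  by (simp add: Pop_def conv_def)

lemma Pop_cont: "continuous_on {0..r} (\<lambda>u. Pop \<alpha> S u x)"
  unfolding Pop_conv using conv_continuous[OF b01 S_cont] .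

lemma Pop_integrable: "u \<in> {0..r} \<Longrightarrow> (\<lambda>s. gkern (\<alpha> - 1) (u - s) *\<^sub>R S s x) integrable_on {0..u}"
  by (rule sing_integrable[OF b01(1)]) (auto intro: S_cont')

definition MP where "MP = MS * gkern \<alpha> r"

lemma MP_pos: "MP \<ge> 0"
  unfolding MP_def using MS(1) gkern_nonneg[of \<alpha> r] \<alpha>1 by simp

lemma Pop_bound: "u \<in> {0..r} \<Longrightarrow> norm (Pop \<alpha> S u x) \<le> MP * norm x"
proof -
  assume u: "u \<in> {0..r}"
  have gi: "((\<lambda>s. gkern (\<alpha> - 1) (u - s)) has_integral gkern \<alpha> u) {0..u}"
    using gkern_integral[OF b01(1), of u] u by simp
  have "norm (Pop \<alpha> S u x) \<le> integral {0..u} (\<lambda>s. gkern (\<alpha> - 1) (u - s) * (MS * norm x))"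
    unfolding Pop_def
  proof (rule integral_norm_bound_integral)
    show "(\<lambda>s. gkern (\<alpha> - 1) (u - s) *\<^sub>R S s x) integrable_on {0..u}" using Pop_integrable[OF u] .
    show "(\<lambda>s. gkern (\<alpha> - 1) (u - s) * (MS * norm x)) integrable_on {0..u}"
      using gi by (intro integrable_on_mult_left) (auto simp: integrable_on_def)
    fix s assume s: "s \<in> {0..u}"
    have "s \<in> {0..r}" using s u by auto
    then show "norm (gkern (\<alpha> - 1) (u - s) *\<^sub>R S s x) \<le> gkern (\<alpha> - 1) (u - s) * (MS * norm x)"
      using MS(2) gkern_nonneg[OF b01(1), of "u - s"] by (auto intro: mult_left_mono)
  qed
  also have "\<dots> = gkern \<alpha> u * (MS * norm x)"
    using integral_unique[OF gi] by simp
  also have "\<dots> \<le> gkern \<alpha> r * (MS * norm x)"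
    using u \<alpha>1 MS(1) by (intro mult_right_mono gkern_mono) auto
  finally show ?thesis by (simp add: MP_def mult_ac)
qed

lemma Pop_diff: "u \<in> {0..r} \<Longrightarrow> Pop \<alpha> S u (x - y) = Pop \<alpha> S u x - Pop \<alpha> S u y"
  unfolding Pop_def
  by (subst integral_diff[symmetric]) (auto intro: Pop_integrable simp: blinfun.diff_right scaleR_diff_right)

end



context opset begin

lemma Pop_comp_cont:
  assumes t: "0 \<le> t" "t \<le> r" and \<phi>: "continuous_on {0..t} \<phi>"
  shows "continuous_on {0..t} (\<lambda>s. Pop \<alpha> S (t - s) (\<phi> s))"
  unfolding continuous_on_def
proof (intro ballI)
  fix s0 assume s0: "s0 \<in> {0..t}"
  let ?F = "at s0 within {0..t}"
  have tr: "\<And>s. s \<in> {0..t} \<Longrightarrow> t - s \<in> {0..r}" using t by auto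
  have ev: "\<forall>\<^sub>F s in ?F. Pop \<alpha> S (t - s) (\<phi> s) = Pop \<alpha> S (t - s) (\<phi> s - \<phi> s0) + Pop \<alpha> S (t - s) (\<phi> s0)"
    unfolding eventually_at_filter by (intro always_eventually) (use Pop_diff tr in auto)
  have l1: "((\<lambda>s. Pop \<alpha> S (t - s) (\<phi> s - \<phi> s0)) \<longlongrightarrow> 0) ?F"
  proof (rule Lim_null_comparison)
    show "\<forall>\<^sub>F s in ?F. norm (Pop \<alpha> S (t - s) (\<phi> s - \<phi> s0)) \<le> MP * norm (\<phi> s - \<phi> s0)"
      unfolding eventually_at_filter by (intro always_eventually) (use Pop_bound tr in auto)
    have "((\<lambda>s. \<phi> s - \<phi> s0) \<longlongrightarrow> \<phi> s0 - \<phi> s0) ?F"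
      using \<phi> s0 by (intro tendsto_diff tendsto_const) (simp add: continuous_on_def)
    then have "((\<lambda>s. norm (\<phi> s - \<phi> s0)) \<longlongrightarrow> 0) ?F" using tendsto_norm by fastforce
    then show "((\<lambda>s. MP * norm (\<phi> s - \<phi> s0)) \<longlongrightarrow> 0) ?F"
      using tendsto_mult_right_zero by blast
  qed
  have l2: "((\<lambda>s. Pop \<alpha> S (t - s) (\<phi> s0)) \<longlongrightarrow> Pop \<alpha> S (t - s0) (\<phi> s0)) ?F"
  proof -
    have "continuous_on {0..t} (\<lambda>s. Pop \<alpha> S (t - s) (\<phi> s0))"
      by (rule continuous_on_compose2[OF Pop_cont, of _ "\<lambda>s. t - s"]) (use tr t in \<open>auto intro: continuous_intros\<close>)
    then show ?thesis using s0 by (simp add: continuous_on_def)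
  qed
  have "((\<lambda>s. Pop \<alpha> S (t - s) (\<phi> s - \<phi> s0) + Pop \<alpha> S (t - s) (\<phi> s0)) \<longlongrightarrow> 0 + Pop \<alpha> S (t - s0) (\<phi> s0)) ?F"
    by (rule tendsto_add[OF l1 l2])
  then show "((\<lambda>s. Pop \<alpha> S (t - s) (\<phi> s)) \<longlongrightarrow> Pop \<alpha> S (t - s0) (\<phi> s0)) ?F"
    using ev by (simp add: tendsto_cong)
qed

definition Rop where "Rop \<tau> x = integral {0..\<tau>} (\<lambda>v. gkern \<alpha> (\<tau> - v) *\<^sub>R S v x)"

lemma Rop_integrand_cont: "\<tau> \<le> r \<Longrightarrow> continuous_on {0..\<tau>} (\<lambda>v. gkern \<alpha> (\<tau> - v) *\<^sub>R S v x)"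
  by (intro continuous_on_scaleR S_cont' continuous_on_compose2[OF continuous_gkern[of \<alpha> UNIV]])
     (use \<alpha>1 in \<open>auto intro: continuous_intros\<close>)

lemma Rop_diff: "\<tau> \<le> r \<Longrightarrow> Rop \<tau> (x - y) = Rop \<tau> x - Rop \<tau> y"
  unfolding Rop_def
  by (subst integral_diff[symmetric])
     (auto intro: integrable_continuous_real Rop_integrand_cont simp: blinfun.diff_right scaleR_diff_right)

lemma Rop_bound: "\<tau> \<in> {0..r} \<Longrightarrow> norm (Rop \<tau> x) \<le> r * MP * norm x"
proof -
  assume \<tau>: "\<tau> \<in> {0..r}"
  have "norm (Rop \<tau> x) \<le> integral {0..\<tau>} (\<lambda>v. MP * norm x)"
    unfolding Rop_def
  proof (rule integral_norm_bound_integral)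
    show "(\<lambda>v. gkern \<alpha> (\<tau> - v) *\<^sub>R S v x) integrable_on {0..\<tau>}"
      using \<tau> by (intro integrable_continuous_real Rop_integrand_cont) auto
    show "(\<lambda>v. MP * norm x) integrable_on {0..\<tau>}" by (rule Henstock_Kurzweil_Integration.integrable_const_ivl)
    fix v assume v: "v \<in> {0..\<tau>}"
    have "norm (gkern \<alpha> (\<tau> - v) *\<^sub>R S v x) = gkern \<alpha> (\<tau> - v) * norm (S v x)"
      using gkern_nonneg[of \<alpha> "\<tau> - v"] \<alpha>1 by simp
    also have "\<dots> \<le> gkern \<alpha> r * (MS * norm x)"
      using v \<tau> \<alpha>1 MS(2)[of v x] gkern_nonneg[of \<alpha> r]
      by (intro mult_mono gkern_mono) auto
    finally show "norm (gkern \<alpha> (\<tau> - v) *\<^sub>R S v x) \<le> MP * norm x" by (simp add: MP_def mult_ac)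
  qed
  also have "\<dots> = \<tau> * (MP * norm x)" using \<tau> by simp
  also have "\<dots> \<le> r * (MP * norm x)" using \<tau> MP_pos by (intro mult_right_mono) auto
  finally show ?thesis by (simp add: mult_ac)
qed

lemma Rop_D_core: "\<tau> \<in> {0..r} \<Longrightarrow> x \<in> D \<Longrightarrow> Rop \<tau> x \<in> D \<and> A (Rop \<tau> x) = S \<tau> x - x"
proof -
  assume \<tau>: "\<tau> \<in> {0..r}" and x: "x \<in> D"
  have Dsub: "subspace D" using cdd by (simp add: closed_densely_defined_def)
  have sc: "\<And>c x. x \<in> D \<Longrightarrow> A (c *\<^sub>R x) = c *\<^sub>R A x" using cdd by (simp add: closed_densely_defined_def)
  have SD: "\<And>v. v \<ge> 0 \<Longrightarrow> S v x \<in> D \<and> A (S v x) = S v (A x)" using rf x unfolding resolvent_family_def by blast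
  have eqn: "S \<tau> x = x + integral {0..\<tau>} (\<lambda>s. gkern \<alpha> (\<tau> - s) *\<^sub>R S s (A x))"
    using rf x \<tau> unfolding resolvent_family_def by auto
  have "Rop \<tau> x \<in> D \<and> A (Rop \<tau> x) = integral {0..\<tau>} (\<lambda>s. gkern \<alpha> (\<tau> - s) *\<^sub>R S s (A x))"
    unfolding Rop_def
  proof (rule graph_integral[OF cdd])
    show "\<And>v. v \<in> {0..\<tau>} \<Longrightarrow> gkern \<alpha> (\<tau> - v) *\<^sub>R S v x \<in> D"
      using SD subspace_scale[OF Dsub] by auto
    show "((\<lambda>v. gkern \<alpha> (\<tau> - v) *\<^sub>R S v x) has_integral integral {0..\<tau>} (\<lambda>v. gkern \<alpha> (\<tau> - v) *\<^sub>R S v x)) {0..\<tau>}"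
      using \<tau> by (intro integrable_integral integrable_continuous_real Rop_integrand_cont) auto
    have "((\<lambda>v. gkern \<alpha> (\<tau> - v) *\<^sub>R S v (A x)) has_integral integral {0..\<tau>} (\<lambda>s. gkern \<alpha> (\<tau> - s) *\<^sub>R S s (A x))) {0..\<tau>}"
      using \<tau> by (intro integrable_integral integrable_continuous_real Rop_integrand_cont) auto
    then show "((\<lambda>v. A (gkern \<alpha> (\<tau> - v) *\<^sub>R S v x)) has_integral integral {0..\<tau>} (\<lambda>s. gkern \<alpha> (\<tau> - s) *\<^sub>R S s (A x))) {0..\<tau>}"
      by (rule has_integral_eq[rotated]) (use SD sc in auto)
  qed
  then show ?thesis using eqn by simp
qed

lemma Rop_D: "\<tau> \<in> {0..r} \<Longrightarrow> Rop \<tau> x \<in> D \<and> A (Rop \<tau> x) = S \<tau> x - x"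
proof -
  assume \<tau>: "\<tau> \<in> {0..r}"
  have "x \<in> closure D" using cdd by (simp add: closed_densely_defined_def)
  then obtain xn where xn: "\<And>n. xn n \<in> D" "xn \<longlonglongrightarrow> x"
    by (auto simp: closure_sequential)
  show ?thesis
  proof (rule cdd_closed_limit[OF cdd, where x = "\<lambda>n. Rop \<tau> (xn n)"])
    show "\<And>n. Rop \<tau> (xn n) \<in> D" using Rop_D_core[OF \<tau> xn(1)] by blast
    show "(\<lambda>n. Rop \<tau> (xn n)) \<longlonglongrightarrow> Rop \<tau> x"
    proof (rule LIM_zero_cancel)
      have "((\<lambda>n. Rop \<tau> (xn n) - Rop \<tau> x) \<longlongrightarrow> 0) sequentially"
      proof (rule Lim_null_comparison)
        show "\<forall>\<^sub>F n in sequentially. norm (Rop \<tau> (xn n) - Rop \<tau> x) \<le> r * MP * norm (xn n - x)"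
          using Rop_diff[of \<tau> "xn _" x] Rop_bound[OF \<tau>] \<tau> by (intro always_eventually allI) (metis atLeastAtMost_iff)
        have "((\<lambda>n. norm (xn n - x)) \<longlongrightarrow> 0) sequentially"
          using xn(2) by (simp add: LIM_zero tendsto_norm_zero)
        then show "((\<lambda>n. r * MP * norm (xn n - x)) \<longlongrightarrow> 0) sequentially"
          by (rule tendsto_mult_right_zero)
      qed
      then show "((\<lambda>n. Rop \<tau> (xn n) - Rop \<tau> x) \<longlongrightarrow> 0) sequentially" .
    qed
    have "(\<lambda>n. S \<tau> (xn n) - xn n) \<longlonglongrightarrow> S \<tau> x - x"
      by (intro tendsto_diff blinfun.tendsto tendsto_const xn(2))
    moreover have "A (Rop \<tau> (xn n)) = S \<tau> (xn n) - xn n" for n using Rop_D_core[OF \<tau> xn(1)] by blast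
    ultimately show "(\<lambda>n. A (Rop \<tau> (xn n))) \<longlonglongrightarrow> S \<tau> x - x" by simp
  qed
qed

end


context opset begin

lemma Pop_int_Rop: "\<tau> \<in> {0..r} \<Longrightarrow> integral {0..\<tau>} (\<lambda>u. Pop \<alpha> S u x) = Rop \<tau> x"
proof -
  assume \<tau>: "\<tau> \<in> {0..r}"
  have "integral {0..\<tau>} (conv (\<alpha> - 1) (\<lambda>s. S s x)) = integral {0..\<tau>} (\<lambda>v. gkern (\<alpha> - 1 + 1) (\<tau> - v) *\<^sub>R S v x)"
    using \<tau> by (intro fubini_conv b01 S_cont') auto
  moreover have "conv (\<alpha> - 1) (\<lambda>s. S s x) = (\<lambda>u. Pop \<alpha> S u x)" by (simp add: Pop_conv fun_eq_iff)
  ultimately show ?thesis by (simp add: Rop_def)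
qed

lemma key_int:
  assumes a: "0 \<le> a" "a \<le> c" "c \<le> t" "t \<le> r"
  shows "integral {a..c} (\<lambda>s. Pop \<alpha> S (t - s) x) = Rop (t - a) x - Rop (t - c) x"
proof -
  let ?\<phi> = "\<lambda>u. Pop \<alpha> S u x"
  define k where "k = t - a - c"
  have "integral {a..c} (\<lambda>s. ?\<phi> (t - s)) = integral {a..c} (\<lambda>s. (\<lambda>y. ?\<phi> (y + k)) (a + c - s))"
    by (simp add: k_def algebra_simps)
  also have "\<dots> = integral {a..c} (\<lambda>y. ?\<phi> (y + k))"
    by (rule integral_flip_real)
  also have "\<dots> = integral {(t - c) - k..(t - a) - k} (\<lambda>y. ?\<phi> (y + k))"
    by (simp add: k_def)
  also have "\<dots> = integral {t - c..t - a} ?\<phi>"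
    by (rule integral_shift_real)
  also have "\<dots> = integral {0..t - a} ?\<phi> - integral {0..t - c} ?\<phi>"
  proof -
    have int: "?\<phi> integrable_on {0..t - a}"
      by (rule integrable_continuous_real, rule continuous_on_subset[OF Pop_cont]) (use a in auto)
    show ?thesis
      using Henstock_Kurzweil_Integration.integral_combine[of 0 "t - c" "t - a" ?\<phi>, OF _ _ int] a
      by (simp add: algebra_simps)
  qed
  also have "\<dots> = Rop (t - a) x - Rop (t - c) x"
    using a by (simp add: Pop_int_Rop)
  finally show ?thesis .
qed

lemma key_D:
  assumes a: "0 \<le> a" "a \<le> c" "c \<le> t" "t \<le> r"
  shows "integral {a..c} (\<lambda>s. Pop \<alpha> S (t - s) x) \<in> D \<and>
         A (integral {a..c} (\<lambda>s. Pop \<alpha> S (t - s) x)) = S (t - a) x - S (t - c) x"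
proof -
  have 1: "Rop (t - a) x \<in> D \<and> A (Rop (t - a) x) = S (t - a) x - x" using a by (intro Rop_D) auto
  have 2: "Rop (t - c) x \<in> D \<and> A (Rop (t - c) x) = S (t - c) x - x" using a by (intro Rop_D) auto
  show ?thesis using cdd_diff[OF cdd, of "Rop (t - a) x" "Rop (t - c) x"] 1 2 key_int[OF a] by simp
qed

end


lemma subdiv_less: "subdivision a b n d \<Longrightarrow> i < j \<Longrightarrow> j \<le> n \<Longrightarrow> d i < d j"
proof (induction j)
  case 0 then show ?case by simp
next
  case (Suc j)
  have s: "d j < d (Suc j)" using Suc.prems by (simp add: subdivision_def)
  show ?case
  proof (cases "i = j")
    case True then show ?thesis using s by simp
  next
    case False
    then have "d i < d j" using Suc by auto
    then show ?thesis using s by simp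
  qed
qed

lemma subdiv_le: "subdivision a b n d \<Longrightarrow> i \<le> j \<Longrightarrow> j \<le> n \<Longrightarrow> d i \<le> d j"
  using subdiv_less[of a b n d i j] by (cases "i = j") auto

lemma subdiv_range: "subdivision a b n d \<Longrightarrow> i \<le> n \<Longrightarrow> a \<le> d i \<and> d i \<le> b"
  using subdiv_le[of a b n d 0 i] subdiv_le[of a b n d i n] by (auto simp: subdivision_def)

lemma integral_subdiv:
  fixes g :: "real \<Rightarrow> 'a::banach"
  assumes sd: "subdivision a b n d" and gi: "g integrable_on {a..b}"
  shows "integral {a..b} g = (\<Sum>i<n. integral {d i..d (Suc i)} g)"
proof -
  have "m \<le> n \<Longrightarrow> integral {d 0..d m} g = (\<Sum>i<m. integral {d i..d (Suc i)} g)" for m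
  proof (induction m)
    case 0 then show ?case by simp
  next
    case (Suc m)
    have r: "a \<le> d 0" "d (Suc m) \<le> b" using subdiv_range[OF sd] Suc.prems by auto
    have gi': "g integrable_on {d 0..d (Suc m)}"
      by (rule integrable_on_subinterval[OF gi]) (use r in auto)
    have "integral {d 0..d (Suc m)} g = integral {d 0..d m} g + integral {d m..d (Suc m)} g"
      using Henstock_Kurzweil_Integration.integral_combine[OF _ _ gi', of "d m"]
        subdiv_le[OF sd, of 0 m] subdiv_le[OF sd, of m "Suc m"] Suc.prems by simp
    then show ?case using Suc by simp
  qed
  from this[of n] show ?thesis using sd by (simp add: subdivision_def)
qed

context opset begin

definition Yd where "Yd t n d \<xi> = (\<Sum>i<n. integral {d i..d (Suc i)} (\<lambda>s. Pop \<alpha> S (t - s) (f (\<xi> i))))"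

definition RSsum where "RSsum t n d \<xi> = (\<Sum>i<n. ((\<lambda>s. S (t - s)) (d (Suc i)) - (\<lambda>s. S (t - s)) (d i)) (f (\<xi> i)))"

lemma Yd_D:
  assumes t: "t \<le> r" and sd: "subdivision 0 t n d"
  shows "Yd t n d \<xi> \<in> D \<and> A (Yd t n d \<xi>) = - RSsum t n d \<xi>"
proof -
  have each: "integral {d i..d (Suc i)} (\<lambda>s. Pop \<alpha> S (t - s) (f (\<xi> i))) \<in> D \<and>
      A (integral {d i..d (Suc i)} (\<lambda>s. Pop \<alpha> S (t - s) (f (\<xi> i)))) = S (t - d i) (f (\<xi> i)) - S (t - d (Suc i)) (f (\<xi> i))"
    if i: "i < n" for i
    using subdiv_range[OF sd, of i] subdiv_range[OF sd, of "Suc i"] subdiv_le[OF sd, of i "Suc i"] i t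
    by (intro key_D) auto
  have "Yd t n d \<xi> \<in> D \<and> A (Yd t n d \<xi>) = (\<Sum>i<n. S (t - d i) (f (\<xi> i)) - S (t - d (Suc i)) (f (\<xi> i)))"
    unfolding Yd_def using cdd_sum[OF cdd, of "{..<n}"] each by simp
  moreover have "(\<Sum>i<n. S (t - d i) (f (\<xi> i)) - S (t - d (Suc i)) (f (\<xi> i))) = - RSsum t n d \<xi>"
    unfolding RSsum_def by (simp add: blinfun.diff_left sum_negf[symmetric])
  ultimately show ?thesis by simp
qed

lemma Pconv_Yd:
  assumes t: "0 \<le> t" "t \<le> r" and sd: "subdivision 0 t n d" and e: "e \<ge> 0"
    and close: "\<And>i s. i < n \<Longrightarrow> s \<in> {d i..d (Suc i)} \<Longrightarrow> norm (f s - f (\<xi> i)) \<le> e"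
  shows "norm (Pconv \<alpha> S f t - Yd t n d \<xi>) \<le> t * MP * e"
proof -
  have fct: "continuous_on {0..t} f" by (rule continuous_on_subset[OF fc]) (use t in auto)
  have pc: "continuous_on {0..t} (\<lambda>s. Pop \<alpha> S (t - s) (f s))" by (rule Pop_comp_cont[OF t fct])
  have rng: "i < n \<Longrightarrow> 0 \<le> d i \<and> d (Suc i) \<le> t \<and> d i \<le> d (Suc i)" for i
    using subdiv_range[OF sd, of i] subdiv_range[OF sd, of "Suc i"] subdiv_le[OF sd, of i "Suc i"] by auto
  have P: "Pconv \<alpha> S f t = (\<Sum>i<n. integral {d i..d (Suc i)} (\<lambda>s. Pop \<alpha> S (t - s) (f s)))"
    unfolding Pconv_def by (rule integral_subdiv[OF sd integrable_continuous_real[OF pc]])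
  have piece: "norm (integral {d i..d (Suc i)} (\<lambda>s. Pop \<alpha> S (t - s) (f s)) -
                     integral {d i..d (Suc i)} (\<lambda>s. Pop \<alpha> S (t - s) (f (\<xi> i))))
               \<le> (d (Suc i) - d i) * (MP * e)" if i: "i < n" for i
  proof -
    have sub: "{d i..d (Suc i)} \<subseteq> {0..t}" using rng[OF i] by auto
    have c1: "continuous_on {d i..d (Suc i)} (\<lambda>s. Pop \<alpha> S (t - s) (f s))"
      by (rule continuous_on_subset[OF pc sub])
    have c2: "continuous_on {d i..d (Suc i)} (\<lambda>s. Pop \<alpha> S (t - s) (f (\<xi> i)))"
      by (rule continuous_on_subset[OF Pop_comp_cont[OF t continuous_on_const] sub])
    have "integral {d i..d (Suc i)} (\<lambda>s. Pop \<alpha> S (t - s) (f s)) - integral {d i..d (Suc i)} (\<lambda>s. Pop \<alpha> S (t - s) (f (\<xi> i)))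
        = integral {d i..d (Suc i)} (\<lambda>s. Pop \<alpha> S (t - s) (f s) - Pop \<alpha> S (t - s) (f (\<xi> i)))"
      using c1 c2 by (subst integral_diff) (auto intro: integrable_continuous_real)
    also have "norm \<dots> \<le> integral {d i..d (Suc i)} (\<lambda>s. MP * e)"
    proof (rule integral_norm_bound_integral)
      show "(\<lambda>s. Pop \<alpha> S (t - s) (f s) - Pop \<alpha> S (t - s) (f (\<xi> i))) integrable_on {d i..d (Suc i)}"
        using c1 c2 by (intro integrable_diff integrable_continuous_real)
      show "(\<lambda>s. MP * e) integrable_on {d i..d (Suc i)}" by (rule Henstock_Kurzweil_Integration.integrable_const_ivl)
      fix s assume s: "s \<in> {d i..d (Suc i)}"
      have tr: "t - s \<in> {0..r}" using s sub t by auto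
      have "Pop \<alpha> S (t - s) (f s) - Pop \<alpha> S (t - s) (f (\<xi> i)) = Pop \<alpha> S (t - s) (f s - f (\<xi> i))"
        using Pop_diff[OF tr] by simp
      also have "norm \<dots> \<le> MP * norm (f s - f (\<xi> i))" by (rule Pop_bound[OF tr])
      also have "\<dots> \<le> MP * e" using close[OF i s] MP_pos by (intro mult_left_mono) auto
      finally show "norm (Pop \<alpha> S (t - s) (f s) - Pop \<alpha> S (t - s) (f (\<xi> i))) \<le> MP * e" .
    qed
    also have "\<dots> = (d (Suc i) - d i) * (MP * e)" using rng[OF i] by simp
    finally show ?thesis .
  qed
  have "Pconv \<alpha> S f t - Yd t n d \<xi> = (\<Sum>i<n. integral {d i..d (Suc i)} (\<lambda>s. Pop \<alpha> S (t - s) (f s)) -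
                     integral {d i..d (Suc i)} (\<lambda>s. Pop \<alpha> S (t - s) (f (\<xi> i))))"
    unfolding P Yd_def by (simp add: sum_subtractf)
  also have "norm \<dots> \<le> (\<Sum>i<n. (d (Suc i) - d i) * (MP * e))"
    by (rule order_trans[OF norm_sum sum_mono]) (use piece in auto)
  also have "\<dots> = (\<Sum>i<n. d (Suc i) - d i) * (MP * e)" by (simp add: sum_distrib_right)
  also have "(\<Sum>i<n. d (Suc i) - d i) = t" using sd by (simp add: sum_lessThan_telescope subdivision_def)
  finally show ?thesis by (simp add: mult_ac)
qed

end


lemma sorted_nth_le:
  fixes xs :: "real list"
  assumes s: "sorted_wrt (<) xs" and "i \<le> j" "j < length xs"
  shows "xs ! i \<le> xs ! j"
proof (cases "i = j")
  case False
  then have "i < j" using assms by simp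
  then show ?thesis using sorted_wrt_nth_less[OF s _ assms(3)] by (simp add: less_imp_le)
qed simp

lemma sorted_card_less:
  fixes xs :: "real list"
  assumes s: "sorted_wrt (<) xs" and k: "k < length xs"
  shows "card {z \<in> set xs. z < xs ! k} = k"
proof -
  have d: "distinct xs" using s by (simp add: strict_sorted_iff)
  have "{z \<in> set xs. z < xs ! k} = (\<lambda>j. xs ! j) ` {..<k}"
  proof (intro equalityI subsetI)
    fix z assume "z \<in> {z \<in> set xs. z < xs ! k}"
    then have z: "z \<in> set xs" "z < xs ! k" by auto
    then obtain j where j: "j < length xs" "z = xs ! j" by (auto simp: in_set_conv_nth)
    have "j < k"
    proof (rule ccontr)
      assume "\<not> j < k"
      then have "k \<le> j" by simp
      then have "xs ! k \<le> xs ! j" using sorted_nth_le[OF s _ j(1)] by simp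
      then show False using z j by simp
    qed
    then show "z \<in> (\<lambda>j. xs ! j) ` {..<k}" using j by auto
  next
    fix z assume "z \<in> (\<lambda>j. xs ! j) ` {..<k}"
    then obtain j where j: "j < k" "z = xs ! j" by auto
    then show "z \<in> {z \<in> set xs. z < xs ! k}" using k s by (auto intro: sorted_wrt_nth_less)
  qed
  moreover have "inj_on (\<lambda>j. xs ! j) {..<k}"
    using d k by (auto simp: inj_on_def nth_eq_iff_index_eq)
  ultimately show ?thesis by (simp add: card_image)
qed

lemma sorted_index:
  fixes xs :: "real list"
  assumes s: "sorted_wrt (<) xs" and y: "y \<in> set xs"
  shows "card {z \<in> set xs. z < y} < length xs \<and> xs ! card {z \<in> set xs. z < y} = y"
proof -
  obtain k where k: "k < length xs" "y = xs ! k" using y by (auto simp: in_set_conv_nth)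
  then show ?thesis using sorted_card_less[OF s k(1)] by simp
qed

lemma sorted_nth_mono:
  fixes xs :: "real list"
  assumes s: "sorted_wrt (<) xs" and "i < length xs" "j < length xs"
  shows "xs ! i < xs ! j \<longleftrightarrow> i < j"
  using assms
  by (metis linorder_neqE_nat order_less_asym sorted_wrt_nth_less less_irrefl)

definition mergelist :: "real set \<Rightarrow> real list" where "mergelist E = sorted_list_of_set E"

lemma merged_subdivision:
  assumes E: "finite E" "E \<subseteq> {a..b}" "a \<in> E" "b \<in> E" and ab: "a < b"
  shows "subdivision a b (card E - 1) (\<lambda>j. mergelist E ! j)"
proof -
  let ?xs = "mergelist E"
  have s: "sorted_wrt (<) ?xs" by (simp add: mergelist_def strict_sorted_list_of_set)
  have len: "length ?xs = card E" using E by (simp add: mergelist_def)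
  have set: "set ?xs = E" using E by (simp add: mergelist_def)
  have cE: "card E \<ge> 2"
  proof -
    have "{a, b} \<subseteq> E" using E by auto
    then have "card {a, b} \<le> card E" using E by (intro card_mono) auto
    then show ?thesis using ab by simp
  qed
  have a0: "?xs ! 0 = a"
  proof -
    have "?xs ! 0 \<in> E" using set len cE by (metis nth_mem not_less_zero less_le_trans zero_less_numeral gr0I)
    then have "a \<le> ?xs ! 0" using E by auto
    moreover obtain k where "k < length ?xs" "?xs ! k = a" using set E by (metis in_set_conv_nth)
    then have "?xs ! 0 \<le> a" using sorted_nth_le[OF s, of 0 k] by simp
    ultimately show ?thesis by simp
  qed
  have bN: "?xs ! (card E - 1) = b"
  proof -
    have lt: "card E - 1 < length ?xs" using len cE by simp
    have "?xs ! (card E - 1) \<in> E" using set lt nth_mem by blast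
    then have "?xs ! (card E - 1) \<le> b" using E by auto
    moreover obtain k where k: "k < length ?xs" "?xs ! k = b" using set E by (metis in_set_conv_nth)
    then have "b \<le> ?xs ! (card E - 1)"
      using sorted_nth_le[OF s _ lt, of k] len by simp
    ultimately show ?thesis by simp
  qed
  show ?thesis unfolding subdivision_def
    using a0 bN s len by (auto intro: sorted_wrt_nth_less)
qed

lemma refine_sum:
  fixes G :: "real \<Rightarrow> 'a::real_normed_vector \<Rightarrow>\<^sub>L 'b::real_normed_vector"
  assumes sd: "subdivision a b n d" and E: "finite E" "d ` {..n} \<subseteq> E"
    and se: "subdivision a b N (\<lambda>j. mergelist E ! j)" and N: "N = card E - 1"
  shows "\<exists>\<sigma>. (\<forall>j<N. \<sigma> j < n \<and> d (\<sigma> j) \<le> mergelist E ! j \<and> mergelist E ! Suc j \<le> d (Suc (\<sigma> j))) \<and>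
             (\<forall>x. (\<Sum>i<n. (G (d (Suc i)) - G (d i)) (x i)) =
                  (\<Sum>j<N. (G (mergelist E ! Suc j) - G (mergelist E ! j)) (x (\<sigma> j))))"
proof -
  let ?xs = "mergelist E"
  let ?e = "\<lambda>j. ?xs ! j"
  have s: "sorted_wrt (<) ?xs" by (simp add: mergelist_def strict_sorted_list_of_set)
  have set: "set ?xs = E" using E by (simp add: mergelist_def)
  have len: "length ?xs = card E" using E by (simp add: mergelist_def)
  have n0: "n > 0 \<or> a = b" using sd by (cases n) (auto simp: subdivision_def)
  have Npos: "card E > 0"
    using E(2) E(1) by (metis atMost_iff card_gt_0_iff empty_iff image_eqI le0 subset_empty)
  define p where "p i = card {z \<in> E. z < d i}" for i
  have pp: "p i < length ?xs \<and> ?e (p i) = d i" if "i \<le> n" for i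
    using sorted_index[OF s, of "d i"] that E set unfolding p_def by auto
  have pmono: "p i < p j" if "i < j" "j \<le> n" for i j
  proof -
    have "?e (p i) < ?e (p j)" using pp[of i] pp[of j] subdiv_less[OF sd that] that by simp
    then show ?thesis using sorted_nth_mono[OF s, of "p i" "p j"] pp[of i] pp[of j] that by simp
  qed
  have p0: "p 0 = 0"
  proof -
    have "?e 0 = a" using se by (simp add: subdivision_def)
    then have "d 0 = ?e 0" using sd by (simp add: subdivision_def)
    then have "?e (p 0) = ?e 0" using pp[of 0] by simp
    moreover have "distinct ?xs" using s by (simp add: strict_sorted_iff)
    ultimately show ?thesis using pp[of 0] len Npos nth_eq_iff_index_eq[of ?xs "p 0" 0] by simp
  qed
  have pn: "p n = N"
  proof -
    have "?e N = b" using se by (simp add: subdivision_def)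
    then have "d n = ?e N" using sd by (simp add: subdivision_def)
    then have "?e (p n) = ?e N" using pp[of n] by simp
    moreover have "N < length ?xs" using N len Npos by simp
    moreover have "distinct ?xs" using s by (simp add: strict_sorted_iff)
    ultimately show ?thesis using pp[of n] nth_eq_iff_index_eq[of ?xs "p n" N] by simp
  qed
  define \<sigma> where "\<sigma> j = card {i. 1 \<le> i \<and> i \<le> n \<and> p i \<le> j}" for j
  have \<sigma>eq: "\<sigma> j = i" if i: "i < n" and j: "p i \<le> j" "j < p (Suc i)" for i j
  proof -
    have "{i'. 1 \<le> i' \<and> i' \<le> n \<and> p i' \<le> j} = {1..i}"
    proof (intro equalityI subsetI)
      fix i' assume "i' \<in> {i'. 1 \<le> i' \<and> i' \<le> n \<and> p i' \<le> j}"
      then have i': "1 \<le> i'" "i' \<le> n" "p i' \<le> j" by auto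
      have "i' \<le> i"
      proof (rule ccontr)
        assume "\<not> i' \<le> i"
        then have "Suc i \<le> i'" by simp
        then have "p (Suc i) \<le> p i'" using pmono[of "Suc i" i'] i' by (cases "Suc i = i'") auto
        then show False using i' j by simp
      qed
      then show "i' \<in> {1..i}" using i' by simp
    next
      fix i' assume i': "i' \<in> {1..i}"
      have "p i' \<le> j" using pmono[of i' i] i' i j by (cases "i' = i") auto
      then show "i' \<in> {i'. 1 \<le> i' \<and> i' \<le> n \<and> p i' \<le> j}" using i' i by auto
    qed
    then show ?thesis by (simp add: \<sigma>_def)
  qed
  have cover: "\<exists>i<n. p i \<le> j \<and> j < p (Suc i)" if j: "j < N" for j
  proof -
    have "\<forall>k\<le>n. j < p k \<longrightarrow> (\<exists>i<k. p i \<le> j \<and> j < p (Suc i))"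
    proof (intro allI)
      fix k show "k \<le> n \<longrightarrow> j < p k \<longrightarrow> (\<exists>i<k. p i \<le> j \<and> j < p (Suc i))"
      proof (induction k)
        case 0 then show ?case using p0 by simp
      next
        case (Suc k)
        show ?case
        proof (intro impI)
          assume "Suc k \<le> n" "j < p (Suc k)"
          then show "\<exists>i<Suc k. p i \<le> j \<and> j < p (Suc i)"
          proof (cases "j < p k")
            case True
            then obtain i where "i < k" "p i \<le> j" "j < p (Suc i)" using Suc.IH \<open>Suc k \<le> n\<close> by auto
            then show ?thesis by (intro exI[of _ i]) auto
          next
            case False
            then show ?thesis using \<open>j < p (Suc k)\<close> by (intro exI[of _ k]) auto
          qed
        qed
      qed
    qed
    then show ?thesis using pn j by auto
  qed
  show ?thesis
  proof (intro exI conjI allI impI)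
    fix j assume j: "j < N"
    obtain i where i: "i < n" "p i \<le> j" "j < p (Suc i)" using cover[OF j] by blast
    have \<sigma>j: "\<sigma> j = i" using \<sigma>eq[OF i] .
    show "\<sigma> j < n" using \<sigma>j i by simp
    have lt1: "p (Suc i) < length ?xs" using pp[of "Suc i"] i by simp
    have jl: "Suc j < length ?xs" using i lt1 by simp
    have "?e (p i) \<le> ?e j"
      using sorted_nth_le[OF s, of "p i" j] i jl by simp
    then show "d (\<sigma> j) \<le> ?e j" using pp[of i] i \<sigma>j by simp
    have "?e (Suc j) \<le> ?e (p (Suc i))"
      using sorted_nth_le[OF s, of "Suc j" "p (Suc i)"] i lt1 by simp
    then show "?e (Suc j) \<le> d (Suc (\<sigma> j))" using pp[of "Suc i"] i \<sigma>j by simp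
  next
    fix x :: "nat \<Rightarrow> 'a"
    let ?F = "\<lambda>j. (G (?e (Suc j)) - G (?e j)) (x (\<sigma> j))"
    have split: "(\<Sum>j<p k. ?F j) = (\<Sum>i<k. \<Sum>j=p i..<p (Suc i). ?F j)" if "k \<le> n" for k
      using that
    proof (induction k)
      case 0 then show ?case using p0 by simp
    next
      case (Suc k)
      have "(\<Sum>j<p (Suc k). ?F j) = (\<Sum>j=0..<p k. ?F j) + (\<Sum>j=p k..<p (Suc k). ?F j)"
        using pmono[of k "Suc k"] Suc.prems
        by (subst sum.atLeastLessThan_concat) (auto simp: atLeast0LessThan)
      then show ?case using Suc by (simp add: atLeast0LessThan)
    qed
    have block: "(\<Sum>j=p i..<p (Suc i). ?F j) = (G (d (Suc i)) - G (d i)) (x i)" if i: "i < n" for i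
    proof -
      have "(\<Sum>j=p i..<p (Suc i). ?F j) = (\<Sum>j=p i..<p (Suc i). G (?e (Suc j)) (x i) - G (?e j) (x i))"
        using \<sigma>eq[OF i] by (intro sum.cong) (auto simp: blinfun.diff_left)
      also have "\<dots> = G (?e (p (Suc i))) (x i) - G (?e (p i)) (x i)"
        using pmono[of i "Suc i"] i by (intro sum_Suc_diff') simp
      also have "\<dots> = (G (d (Suc i)) - G (d i)) (x i)"
        using pp[of i] pp[of "Suc i"] i by (simp add: blinfun.diff_left)
      finally show ?thesis .
    qed
    show "(\<Sum>i<n. (G (d (Suc i)) - G (d i)) (x i)) = (\<Sum>j<N. ?F j)"
      using split[of n] block pn by simp
  qed
qed



lemma RS_cauchy_core:
  fixes G :: "real \<Rightarrow> 'a::banach \<Rightarrow>\<^sub>L 'a" and f :: "real \<Rightarrow> 'a"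
  assumes ab: "a < b"
    and sv: "\<And>N e ys. subdivision a b N e \<Longrightarrow> (\<forall>j<N. norm (ys j) \<le> 1) \<Longrightarrow>
              norm (\<Sum>j<N. (G (e (Suc j)) - G (e j)) (ys j)) \<le> M"
    and eps: "\<epsilon> > 0"
    and fclose: "\<And>s s'. s \<in> {a..b} \<Longrightarrow> s' \<in> {a..b} \<Longrightarrow> \<bar>s - s'\<bar> < 2 * \<delta> \<Longrightarrow> norm (f s - f s') \<le> \<epsilon>"
    and sd1: "subdivision a b n d" and tg1: "\<forall>i<n. d i \<le> \<xi> i \<and> \<xi> i \<le> d (Suc i)"
    and ms1: "\<forall>i<n. d (Suc i) - d i < \<delta>"
    and sd2: "subdivision a b m d'" and tg2: "\<forall>i<m. d' i \<le> \<xi>' i \<and> \<xi>' i \<le> d' (Suc i)"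
    and ms2: "\<forall>i<m. d' (Suc i) - d' i < \<delta>"
  shows "norm ((\<Sum>i<n. (G (d (Suc i)) - G (d i)) (f (\<xi> i))) - (\<Sum>i<m. (G (d' (Suc i)) - G (d' i)) (f (\<xi>' i)))) \<le> M * \<epsilon>"
proof -
  define E where "E = d ` {..n} \<union> d' ` {..m}"
  have Ef: "finite E" by (simp add: E_def)
  have Eab: "E \<subseteq> {a..b}" using subdiv_range[OF sd1] subdiv_range[OF sd2] by (auto simp: E_def)
  have aE: "a \<in> E" using sd1 by (auto simp: E_def subdivision_def intro!: image_eqI[of a d 0])
  have bE: "b \<in> E" using sd1 by (auto simp: E_def subdivision_def intro!: image_eqI[of b d n])
  define N where "N = card E - 1"
  let ?e = "\<lambda>j. mergelist E ! j"
  have se: "subdivision a b N ?e" unfolding N_def by (rule merged_subdivision[OF Ef Eab aE bE ab])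
  obtain \<sigma> where \<sigma>: "\<forall>j<N. \<sigma> j < n \<and> d (\<sigma> j) \<le> ?e j \<and> ?e (Suc j) \<le> d (Suc (\<sigma> j))"
    "\<And>x. (\<Sum>i<n. (G (d (Suc i)) - G (d i)) (x i)) = (\<Sum>j<N. (G (?e (Suc j)) - G (?e j)) (x (\<sigma> j)))"
    using refine_sum[OF sd1 Ef _ se N_def, of G] by (auto simp: E_def)
  obtain \<sigma>' where \<sigma>': "\<forall>j<N. \<sigma>' j < m \<and> d' (\<sigma>' j) \<le> ?e j \<and> ?e (Suc j) \<le> d' (Suc (\<sigma>' j))"
    "\<And>x. (\<Sum>i<m. (G (d' (Suc i)) - G (d' i)) (x i)) = (\<Sum>j<N. (G (?e (Suc j)) - G (?e j)) (x (\<sigma>' j)))"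
    using refine_sum[OF sd2 Ef _ se N_def, of G] by (auto simp: E_def)
  have elt: "?e j < ?e (Suc j)" if "j < N" for j using se that by (simp add: subdivision_def)
  define y where "y j = (1 / \<epsilon>) *\<^sub>R (f (\<xi> (\<sigma> j)) - f (\<xi>' (\<sigma>' j)))" for j
  have close: "norm (f (\<xi> (\<sigma> j)) - f (\<xi>' (\<sigma>' j))) \<le> \<epsilon>" if j: "j < N" for j
  proof -
    have i1: "\<sigma> j < n" "d (\<sigma> j) \<le> ?e j" "?e (Suc j) \<le> d (Suc (\<sigma> j))" using \<sigma>(1) j by auto
    have i2: "\<sigma>' j < m" "d' (\<sigma>' j) \<le> ?e j" "?e (Suc j) \<le> d' (Suc (\<sigma>' j))" using \<sigma>'(1) j by auto
    have t1: "d (\<sigma> j) \<le> \<xi> (\<sigma> j)" "\<xi> (\<sigma> j) \<le> d (Suc (\<sigma> j))" using tg1 i1 by auto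
    have t2: "d' (\<sigma>' j) \<le> \<xi>' (\<sigma>' j)" "\<xi>' (\<sigma>' j) \<le> d' (Suc (\<sigma>' j))" using tg2 i2 by auto
    have m1: "d (Suc (\<sigma> j)) - d (\<sigma> j) < \<delta>" using ms1 i1 by auto
    have m2: "d' (Suc (\<sigma>' j)) - d' (\<sigma>' j) < \<delta>" using ms2 i2 by auto
    have ej: "?e j < ?e (Suc j)" using elt[OF j] .
    have "\<bar>\<xi> (\<sigma> j) - \<xi>' (\<sigma>' j)\<bar> < 2 * \<delta>" using t1 t2 m1 m2 i1 i2 ej by linarith
    moreover have "\<xi> (\<sigma> j) \<in> {a..b}"
      using t1 subdiv_range[OF sd1, of "\<sigma> j"] subdiv_range[OF sd1, of "Suc (\<sigma> j)"] i1 by auto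
    moreover have "\<xi>' (\<sigma>' j) \<in> {a..b}"
      using t2 subdiv_range[OF sd2, of "\<sigma>' j"] subdiv_range[OF sd2, of "Suc (\<sigma>' j)"] i2 by auto
    ultimately show ?thesis using fclose by blast
  qed
  have ys: "\<forall>j<N. norm (y j) \<le> 1"
    using close eps by (auto simp: y_def divide_simps)
  have "(\<Sum>i<n. (G (d (Suc i)) - G (d i)) (f (\<xi> i))) - (\<Sum>i<m. (G (d' (Suc i)) - G (d' i)) (f (\<xi>' i)))
      = (\<Sum>j<N. (G (?e (Suc j)) - G (?e j)) (f (\<xi> (\<sigma> j))) - (G (?e (Suc j)) - G (?e j)) (f (\<xi>' (\<sigma>' j))))"
    using \<sigma>(2)[of "\<lambda>i. f (\<xi> i)"] \<sigma>'(2)[of "\<lambda>i. f (\<xi>' i)"] by (simp add: sum_subtractf)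
  also have "\<dots> = (\<Sum>j<N. \<epsilon> *\<^sub>R (G (?e (Suc j)) - G (?e j)) (y j))"
    using eps by (intro sum.cong refl) (simp add: y_def blinfun.scaleR_right blinfun.diff_right[symmetric])
  also have "\<dots> = \<epsilon> *\<^sub>R (\<Sum>j<N. (G (?e (Suc j)) - G (?e j)) (y j))"
    by (simp add: scaleR_sum_right)
  finally have eq: "(\<Sum>i<n. (G (d (Suc i)) - G (d i)) (f (\<xi> i))) - (\<Sum>i<m. (G (d' (Suc i)) - G (d' i)) (f (\<xi>' i)))
      = \<epsilon> *\<^sub>R (\<Sum>j<N. (G (?e (Suc j)) - G (?e j)) (y j))" .
  have "norm (\<Sum>j<N. (G (?e (Suc j)) - G (?e j)) (y j)) \<le> M" by (rule sv[OF se ys])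
  then show ?thesis unfolding eq using eps by (simp add: mult.commute mult_left_mono)
qed



context opset begin

lemma sv_G:
  assumes t: "0 < t" "t \<le> r"
  shows "\<exists>M. \<forall>N e ys. subdivision 0 t N e \<longrightarrow> (\<forall>j<N. norm (ys j) \<le> 1) \<longrightarrow>
      norm (\<Sum>j<N. ((\<lambda>s. S (t - s)) (e (Suc j)) - (\<lambda>s. S (t - s)) (e j)) (ys j)) \<le> M"
proof -
  obtain M where M: "\<And>n d xs. subdivision 0 r n d \<Longrightarrow> (\<forall>i<n. norm (xs i) \<le> 1) \<Longrightarrow>
        norm (\<Sum>i<n. (S (d (Suc i)) - S (d i)) (xs i)) \<le> M"
    using bsv unfolding bounded_semivariation_def by blast
  show ?thesis
  proof (intro exI allI impI)
    fix N e and ys :: "nat \<Rightarrow> 'a" assume sd: "subdivision 0 t N e" and ys: "\<forall>j<N. norm (ys j) \<le> 1"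
    define e' where "e' k = (if k \<le> N then t - e (N - k) else r)" for k
    define n' where "n' = (if t < r then Suc N else N)"
    define xs' where "xs' k = (if k < N then ys (N - Suc k) else 0)" for k
    have e0: "e 0 = 0" and eN: "e N = t" using sd by (auto simp: subdivision_def)
    have sd': "subdivision 0 r n' e'"
      unfolding subdivision_def
    proof (intro conjI allI impI)
      show "e' 0 = 0" using eN by (simp add: e'_def)
      show "e' n' = r" using e0 t by (auto simp: e'_def n'_def)
      fix k assume k: "k < n'"
      show "e' k < e' (Suc k)"
      proof (cases "k < N")
        case True
        have "N - k = Suc (N - Suc k)" using True by simp
        then have "e (N - Suc k) < e (N - k)" using sd True by (simp add: subdivision_def)
        then show ?thesis using True by (simp add: e'_def)
      next
        case False
        then have "k = N" "t < r" using k by (auto simp: n'_def split: if_splits)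
        then show ?thesis using e0 by (simp add: e'_def)
      qed
    qed
    have xs': "\<forall>i<n'. norm (xs' i) \<le> 1" using ys by (auto simp: xs'_def)
    have "(\<Sum>i<n'. (S (e' (Suc i)) - S (e' i)) (xs' i)) = (\<Sum>i<N. (S (e' (Suc i)) - S (e' i)) (xs' i))"
    proof (cases "t < r")
      case True
      then show ?thesis by (simp add: n'_def xs'_def)
    next
      case False
      then show ?thesis by (simp add: n'_def)
    qed
    also have "\<dots> = (\<Sum>k<N. (\<lambda>j. (S (t - e j) - S (t - e (Suc j))) (ys j)) (N - Suc k))"
    proof (rule sum.cong[OF refl])
      fix k assume "k \<in> {..<N}"
      then have k: "k < N" by simp
      have "N - k = Suc (N - Suc k)" using k by simp
      then show "(S (e' (Suc k)) - S (e' k)) (xs' k) = (\<lambda>j. (S (t - e j) - S (t - e (Suc j))) (ys j)) (N - Suc k)"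
        using k by (simp add: e'_def xs'_def)
    qed
    also have "\<dots> = (\<Sum>j<N. (S (t - e j) - S (t - e (Suc j))) (ys j))"
      by (rule sum.nat_diff_reindex)
    also have "\<dots> = (\<Sum>j<N. - (((\<lambda>s. S (t - s)) (e (Suc j)) - (\<lambda>s. S (t - s)) (e j)) (ys j)))"
      by (intro sum.cong refl) (simp add: blinfun.diff_left)
    also have "\<dots> = - (\<Sum>j<N. ((\<lambda>s. S (t - s)) (e (Suc j)) - (\<lambda>s. S (t - s)) (e j)) (ys j))"
      by (rule sum_negf)
    finally have eq: "(\<Sum>i<n'. (S (e' (Suc i)) - S (e' i)) (xs' i)) = - (\<Sum>j<N. ((\<lambda>s. S (t - s)) (e (Suc j)) - (\<lambda>s. S (t - s)) (e j)) (ys j))" .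
    have "norm (\<Sum>j<N. ((\<lambda>s. S (t - s)) (e (Suc j)) - (\<lambda>s. S (t - s)) (e j)) (ys j))
        = norm (\<Sum>i<n'. (S (e' (Suc i)) - S (e' i)) (xs' i))"
      unfolding eq norm_minus_cancel ..
    also have "\<dots> \<le> M" by (rule M[OF sd' xs'])
    finally show "norm (\<Sum>j<N. ((\<lambda>s. S (t - s)) (e (Suc j)) - (\<lambda>s. S (t - s)) (e j)) (ys j)) \<le> M" .
  qed
qed

end


context opset begin

lemma f_unif:
  assumes e: "e > 0"
  shows "\<exists>\<delta>>0. \<forall>s s'. s \<in> {0..r} \<longrightarrow> s' \<in> {0..r} \<longrightarrow> \<bar>s - s'\<bar> < 2 * \<delta> \<longrightarrow> norm (f s - f s') \<le> e"
proof -
  have "uniformly_continuous_on {0..r} f" by (rule compact_uniformly_continuous[OF fc compact_Icc])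
  then obtain d where d: "d > 0" "\<And>x x'. x \<in> {0..r} \<Longrightarrow> x' \<in> {0..r} \<Longrightarrow> dist x' x < d \<Longrightarrow> dist (f x') (f x) < e"
    unfolding uniformly_continuous_on_def using e by metis
  show ?thesis
  proof (intro exI conjI allI impI)
    show "d / 2 > 0" using d by simp
    fix s s' assume "s \<in> {0..r}" "s' \<in> {0..r}" "\<bar>s - s'\<bar> < 2 * (d / 2)"
    then show "norm (f s - f s') \<le> e" using d(2)[of s' s] by (simp add: dist_real_def dist_norm less_imp_le)
  qed
qed

definition upart where "upart t k i = t * real i / real k"

lemma upart_sub: "0 < t \<Longrightarrow> k > 0 \<Longrightarrow> subdivision 0 t k (upart t k)"
  by (auto simp: subdivision_def upart_def divide_strict_right_mono)

lemma upart_mesh: "upart t k (Suc i) - upart t k i = t / real k"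
  by (simp add: upart_def add_divide_distrib[symmetric] algebra_simps)

lemma RS_close:
  assumes t: "0 < t" "t \<le> r" and sv: "\<And>N e ys. subdivision 0 t N e \<Longrightarrow> (\<forall>j<N. norm (ys j) \<le> 1) \<Longrightarrow>
      norm (\<Sum>j<N. ((\<lambda>s. S (t - s)) (e (Suc j)) - (\<lambda>s. S (t - s)) (e j)) (ys j)) \<le> M"
    and e: "e > 0"
  shows "\<exists>\<delta>>0. \<forall>n d \<xi> m d' \<xi>'. subdivision 0 t n d \<longrightarrow> (\<forall>i<n. d i \<le> \<xi> i \<and> \<xi> i \<le> d (Suc i)) \<longrightarrow>
     (\<forall>i<n. d (Suc i) - d i < \<delta>) \<longrightarrow>
     subdivision 0 t m d' \<longrightarrow> (\<forall>i<m. d' i \<le> \<xi>' i \<and> \<xi>' i \<le> d' (Suc i)) \<longrightarrow>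
     (\<forall>i<m. d' (Suc i) - d' i < \<delta>) \<longrightarrow>
     norm (RSsum t n d \<xi> - RSsum t m d' \<xi>') \<le> M * e"
proof -
  obtain \<delta> where \<delta>: "\<delta> > 0" "\<And>s s'. s \<in> {0..r} \<Longrightarrow> s' \<in> {0..r} \<Longrightarrow> \<bar>s - s'\<bar> < 2 * \<delta> \<Longrightarrow> norm (f s - f s') \<le> e"
    using f_unif[OF e] by blast
  show ?thesis
  proof (intro exI conjI allI impI)
    show "\<delta> > 0" by fact
    fix n d \<xi> m d' \<xi>'
    assume h: "subdivision 0 t n d" "\<forall>i<n. d i \<le> \<xi> i \<and> \<xi> i \<le> d (Suc i)" "\<forall>i<n. d (Suc i) - d i < \<delta>"
      "subdivision 0 t m d'" "\<forall>i<m. d' i \<le> \<xi>' i \<and> \<xi>' i \<le> d' (Suc i)" "\<forall>i<m. d' (Suc i) - d' i < \<delta>"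
    show "norm (RSsum t n d \<xi> - RSsum t m d' \<xi>') \<le> M * e"
      unfolding RSsum_def
      by (rule RS_cauchy_core[where G = "\<lambda>s. S (t - s)", OF t(1) sv e _ h])
         (use \<delta>(2) t in auto)
  qed
qed

end


context opset begin

lemma upart_tags: "0 < t \<Longrightarrow> \<forall>i<Suc k. upart t (Suc k) i \<le> upart t (Suc k) i \<and> upart t (Suc k) i \<le> upart t (Suc k) (Suc i)"
  by (auto simp: upart_def divide_right_mono)

lemma small_mesh: "0 < t \<Longrightarrow> \<delta> > 0 \<Longrightarrow> \<exists>K. \<forall>k\<ge>K. t / real (Suc k) < \<delta>"
proof -
  assume t: "0 < t" and d: "\<delta> > 0"
  obtain K :: nat where K: "t / \<delta> < real K" using reals_Archimedean2 by blast
  show ?thesis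
  proof (intro exI allI impI)
    fix k assume "K \<le> k"
    then have "t / \<delta> < real (Suc k)" using K by linarith
    then show "t / real (Suc k) < \<delta>" using d by (simp add: field_simps)
  qed
qed

lemma main_pos:
  assumes t: "0 < t" "t \<le> r"
  shows "Pconv \<alpha> S f t \<in> D \<and> RS_has_integral (\<lambda>s. S (t - s)) f 0 t (- A (Pconv \<alpha> S f t))"
proof -
  obtain M0 where M0: "\<And>N e ys. subdivision 0 t N e \<Longrightarrow> (\<forall>j<N. norm (ys j) \<le> 1) \<Longrightarrow>
      norm (\<Sum>j<N. ((\<lambda>s. S (t - s)) (e (Suc j)) - (\<lambda>s. S (t - s)) (e j)) (ys j)) \<le> M0"
    using sv_G[OF t] by blast
  define M where "M = \<bar>M0\<bar> + 1"
  have Mpos: "M > 0" by (simp add: M_def)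
  have sv: "\<And>N e ys. subdivision 0 t N e \<Longrightarrow> (\<forall>j<N. norm (ys j) \<le> 1) \<Longrightarrow>
      norm (\<Sum>j<N. ((\<lambda>s. S (t - s)) (e (Suc j)) - (\<lambda>s. S (t - s)) (e j)) (ys j)) \<le> M"
    using M0 unfolding M_def by (meson abs_ge_self add_increasing2 order_trans zero_le_one)
  define u where "u k = upart t (Suc k)" for k
  define RSk where "RSk k = RSsum t (Suc k) (u k) (u k)" for k
  define Yk where "Yk k = Yd t (Suc k) (u k) (u k)" for k
  have usub: "subdivision 0 t (Suc k) (u k)" for k unfolding u_def by (rule upart_sub[OF t(1)]) simp
  have utag: "\<forall>i<Suc k. u k i \<le> u k i \<and> u k i \<le> u k (Suc i)" for k
    unfolding u_def using upart_tags[OF t(1)] by blast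
  have umesh: "u k (Suc i) - u k i = t / real (Suc k)" for k i unfolding u_def by (rule upart_mesh)
  have cau: "Cauchy RSk"
  proof (rule CauchyI)
    fix e :: real assume e: "e > 0"
    obtain \<delta> where \<delta>: "\<delta> > 0" and cl: "\<And>n d \<xi> m d' \<xi>'. subdivision 0 t n d \<Longrightarrow> (\<forall>i<n. d i \<le> \<xi> i \<and> \<xi> i \<le> d (Suc i)) \<Longrightarrow>
     (\<forall>i<n. d (Suc i) - d i < \<delta>) \<Longrightarrow>
     subdivision 0 t m d' \<Longrightarrow> (\<forall>i<m. d' i \<le> \<xi>' i \<and> \<xi>' i \<le> d' (Suc i)) \<Longrightarrow>
     (\<forall>i<m. d' (Suc i) - d' i < \<delta>) \<Longrightarrow>
     norm (RSsum t n d \<xi> - RSsum t m d' \<xi>') \<le> M * (e / (2 * M))"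
      using RS_close[OF t sv, of "e / (2 * M)"] e Mpos by auto
    obtain K where K: "\<And>k. k \<ge> K \<Longrightarrow> t / real (Suc k) < \<delta>" using small_mesh[OF t(1) \<delta>] by blast
    show "\<exists>K. \<forall>m\<ge>K. \<forall>n\<ge>K. norm (RSk m - RSk n) < e"
    proof (intro exI allI impI)
      fix m n assume mn: "K \<le> m" "K \<le> n"
      have "norm (RSk m - RSk n) \<le> M * (e / (2 * M))"
        unfolding RSk_def by (rule cl[OF usub utag _ usub utag]) (use K mn umesh in auto)
      also have "\<dots> < e" using Mpos e by (simp add: field_simps)
      finally show "norm (RSk m - RSk n) < e" .
    qed
  qed
  then obtain L where L: "RSk \<longlonglongrightarrow> L" using Cauchy_convergent_iff convergent_def by blast
  have Ylim: "Yk \<longlonglongrightarrow> Pconv \<alpha> S f t"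
  proof (rule LIMSEQ_I)
    fix e :: real assume e: "e > 0"
    define \<eta> where "\<eta> = e / (t * MP + 1)"
    have \<eta>: "\<eta> > 0" using e MP_pos t by (simp add: \<eta>_def add_nonneg_pos)
    obtain \<delta> where \<delta>: "\<delta> > 0" "\<And>s s'. s \<in> {0..r} \<Longrightarrow> s' \<in> {0..r} \<Longrightarrow> \<bar>s - s'\<bar> < 2 * \<delta> \<Longrightarrow> norm (f s - f s') \<le> \<eta>"
      using f_unif[OF \<eta>] by blast
    obtain K where K: "\<And>k. k \<ge> K \<Longrightarrow> t / real (Suc k) < \<delta>" using small_mesh[OF t(1) \<delta>(1)] by blast
    show "\<exists>no. \<forall>k\<ge>no. norm (Yk k - Pconv \<alpha> S f t) < e"
    proof (intro exI allI impI)
      fix k assume k: "K \<le> k"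
      have close: "norm (f s - f (u k i)) \<le> \<eta>" if i: "i < Suc k" and s: "s \<in> {u k i..u k (Suc i)}" for i s
      proof (rule \<delta>(2))
        have r1: "0 \<le> u k i" "u k (Suc i) \<le> t"
          using subdiv_range[OF usub, of i k] subdiv_range[OF usub, of "Suc i" k] i by auto
        show "s \<in> {0..r}" "u k i \<in> {0..r}" using s r1 t subdiv_range[OF usub, of i k] i by auto
        have "s - u k i \<le> t / real (Suc k)" using s umesh[of k i] by auto
        then show "\<bar>s - u k i\<bar> < 2 * \<delta>" using s K[OF k] \<delta>(1) by auto
      qed
      have "norm (Pconv \<alpha> S f t - Yk k) \<le> t * MP * \<eta>"
        unfolding Yk_def by (rule Pconv_Yd[OF _ t(2) usub]) (use t \<eta> close in auto)
      also have "\<dots> < e"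
      proof -
        have "t * MP * \<eta> = e * (t * MP) / (t * MP + 1)" by (simp add: \<eta>_def)
        also have "\<dots> < e" using e MP_pos t by (simp add: divide_less_eq add_nonneg_pos)
        finally show ?thesis .
      qed
      finally show "norm (Yk k - Pconv \<alpha> S f t) < e" by (simp add: norm_minus_commute)
    qed
  qed
  have YD: "Yk k \<in> D \<and> A (Yk k) = - RSk k" for k
    unfolding Yk_def RSk_def by (rule Yd_D[OF t(2) usub])
  have PD: "Pconv \<alpha> S f t \<in> D \<and> A (Pconv \<alpha> S f t) = - L"
  proof (rule cdd_closed_limit[OF cdd, where x = Yk])
    show "\<And>n. Yk n \<in> D" using YD by blast
    show "Yk \<longlonglongrightarrow> Pconv \<alpha> S f t" by (rule Ylim)
    have "(\<lambda>n. - RSk n) \<longlonglongrightarrow> - L" by (rule tendsto_minus[OF L])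
    then show "(\<lambda>n. A (Yk n)) \<longlonglongrightarrow> - L" using YD by simp
  qed
  have LA: "- A (Pconv \<alpha> S f t) = L" using PD by simp
  have RS: "RS_has_integral (\<lambda>s. S (t - s)) f 0 t L"
    unfolding RS_has_integral_def
  proof (intro allI impI)
    fix e :: real assume e: "e > 0"
    obtain \<delta> where \<delta>: "\<delta> > 0" and cl: "\<And>n d \<xi> m d' \<xi>'. subdivision 0 t n d \<Longrightarrow> (\<forall>i<n. d i \<le> \<xi> i \<and> \<xi> i \<le> d (Suc i)) \<Longrightarrow>
     (\<forall>i<n. d (Suc i) - d i < \<delta>) \<Longrightarrow>
     subdivision 0 t m d' \<Longrightarrow> (\<forall>i<m. d' i \<le> \<xi>' i \<and> \<xi>' i \<le> d' (Suc i)) \<Longrightarrow>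
     (\<forall>i<m. d' (Suc i) - d' i < \<delta>) \<Longrightarrow>
     norm (RSsum t n d \<xi> - RSsum t m d' \<xi>') \<le> M * (e / (2 * M))"
      using RS_close[OF t sv, of "e / (2 * M)"] e Mpos by auto
    obtain K1 where K1: "\<And>k. k \<ge> K1 \<Longrightarrow> t / real (Suc k) < \<delta>" using small_mesh[OF t(1) \<delta>] by blast
    obtain K2 where K2: "\<And>k. k \<ge> K2 \<Longrightarrow> norm (RSk k - L) < e / 2"
      using LIMSEQ_D[OF L, of "e / 2"] e by auto
    define k where "k = max K1 K2"
    show "\<exists>\<delta>>0. \<forall>n d \<xi>. subdivision 0 t n d \<and> (\<forall>i<n. d i \<le> \<xi> i \<and> \<xi> i \<le> d (Suc i)) \<and>
        (\<forall>i<n. d (Suc i) - d i < \<delta>) \<longrightarrow>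
        norm ((\<Sum>i<n. (S (t - d (Suc i)) - S (t - d i)) (f (\<xi> i))) - L) < e"
    proof (intro exI conjI allI impI)
      show "\<delta> > 0" by fact
      fix n d \<xi> assume h: "subdivision 0 t n d \<and> (\<forall>i<n. d i \<le> \<xi> i \<and> \<xi> i \<le> d (Suc i)) \<and> (\<forall>i<n. d (Suc i) - d i < \<delta>)"
      have c1: "norm (RSsum t n d \<xi> - RSk k) \<le> M * (e / (2 * M))"
        unfolding RSk_def using h by (intro cl[OF _ _ _ usub utag]) (use K1 umesh in \<open>auto simp: k_def\<close>)
      have c2: "norm (RSk k - L) < e / 2" using K2 by (simp add: k_def)
      have "norm (RSsum t n d \<xi> - L) \<le> norm (RSsum t n d \<xi> - RSk k) + norm (RSk k - L)"
        by (rule norm_diff_triangle_le[OF order_refl order_refl])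
      also have "\<dots> < M * (e / (2 * M)) + e / 2" using c1 c2 by simp
      also have "\<dots> = e" using Mpos by (simp add: field_simps)
      finally show "norm ((\<Sum>i<n. (S (t - d (Suc i)) - S (t - d i)) (f (\<xi> i))) - L) < e"
        by (simp add: RSsum_def)
    qed
  qed
  show ?thesis using PD RS LA by simp
qed

lemma main_zero: "Pconv \<alpha> S f 0 \<in> D \<and> RS_has_integral (\<lambda>s. S (0 - s)) f 0 0 (- A (Pconv \<alpha> S f 0))"
proof -
  have Dsub: "subspace D" using cdd by (simp add: closed_densely_defined_def)
  have sc: "\<And>c x. x \<in> D \<Longrightarrow> A (c *\<^sub>R x) = c *\<^sub>R A x" using cdd by (simp add: closed_densely_defined_def)
  have A0: "A 0 = 0" using sc[OF subspace_0[OF Dsub], of 0] by simp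
  have P0: "Pconv \<alpha> S f 0 = 0" by (simp add: Pconv_def)
  have n0: "n = 0" if "subdivision 0 0 n d" for n d
  proof (rule ccontr)
    assume "n \<noteq> 0"
    then have "d 0 < d n" using subdiv_less[OF that, of 0 n] by simp
    then show False using that by (simp add: subdivision_def)
  qed
  show ?thesis
    unfolding P0 RS_has_integral_def using subspace_0[OF Dsub] A0
    by (auto intro!: exI[of _ 1] dest!: n0)
qed

end


theorem lemma3p2:
  fixes \<alpha> r :: real and D :: "'a::banach set" and A :: "'a \<Rightarrow> 'a"
    and S :: "real \<Rightarrow> 'a \<Rightarrow>\<^sub>L 'a" and f :: "real \<Rightarrow> 'a"
  assumes "1 < \<alpha>" "\<alpha> < 2"
    and "closed_densely_defined D A"
    and "resolvent_family \<alpha> D A S"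
    and "r > 0"
    and "bounded_semivariation S 0 r"
    and "continuous_on {0..r} f"
  shows "\<forall>t\<in>{0..r}. Pconv \<alpha> S f t \<in> D \<and>
           RS_has_integral (\<lambda>s. S (t - s)) f 0 t (- A (Pconv \<alpha> S f t))"
proof -
  interpret opset \<alpha> r D A S f by (intro opset.intro assms)
  show ?thesis
  proof
    fix t assume t: "t \<in> {0..r}"
    show "Pconv \<alpha> S f t \<in> D \<and> RS_has_integral (\<lambda>s. S (t - s)) f 0 t (- A (Pconv \<alpha> S f t))"
    proof (cases "t = 0")
      case True
      then show ?thesis using main_zero by simp
    next
      case False
      then show ?thesis using main_pos t by auto
    qed
  qed
qed

end
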